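(* Let $V$ be a vertex operator algebra, $z\in\mathbb C^\times$, $W_1,W_2$ generalized $V$-modules, $W_3$ an ordinary (respectively generalized) $V$-module, and $F$ a quasi-$P(z)$-intertwining map of type $\binom{W_3}{W_1\,W_2}$. Let $W\subset W_3$ be the span of all homogeneous components (in the generalized $L(0)$-eigenspace decomposition) of the elements $F(w_{(1)}\otimes w_{(2)})\in\overline W_3$, $w_{(1)}\in W_1$, $w_{(2)}\in W_2$. Then $W$ is an ordinary (respectively generalized) $V$-submodule of $W_3$, and the $V$-module $F^\vee(W_3')$ (under $\tau_{P(z)}$) is isomorphic to the contragredient module $W'$; indeed both natural surjections $W_3'\to F^\vee(W_3')$ and $W_3'\to W'$ have kernel $\{\alpha\in W_3'\mid\langle\alpha,W\rangle=0\}$.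
   Context: $V$ is a vertex operator algebra; $L(n)$ are the Virasoro operators. A generalized $V$-module is a weak $V$-module $W=\coprod_{n\in\mathbb C}W_{[n]}$ with $W_{[n]}$ the generalized $L(0)$-eigenspace of eigenvalue $n$, each finite-dimensional, $W_{[n+k]}=0$ for integers $k$ sufficiently negative; ordinary if $L(0)$ is semisimple. $\overline W=\prod_nW_{[n]}$; $W'=\coprod_nW_{[n]}^*$ with $\langle Y'(v,x)\alpha,w\rangle=\langle\alpha,Y(e^{xL(1)}(-x^{-2})^{L(0)}v,x^{-1})w\rangle$. A quasi-$P(z)$-intertwining map of type $\binom{W_3}{W_1\,W_2}$ is a linear $F:W_1\otimes W_2\to\overline W_3$ with $Y_3(v,x_1)F(w_{(1)}\otimes w_{(2)})-F(w_{(1)}\otimes Y_2(v,x_1)w_{(2)})=\mathrm{Res}_{x_0}z^{-1}\delta(\frac{x_1-x_0}{z})F(Y_1(v,x_0)w_{(1)}\otimes w_{(2)})$. $F^\vee(\alpha)(w_{(1)}\otimes w_{(2)})=\langle\alpha,F(w_{(1)}\otimes w_{(2)})\rangle$. $\tau_{P(z)}$ on $(W_1\otimes W_2)^*$: $(\tau_{P(z)}(Y_t(v,x_1))\lambda)(w_{(1)}\otimes w_{(2)})=\mathrm{Res}_{x_0}z^{-1}\delta(\frac{x_1^{-1}-x_0}{z})\lambda(Y_1(e^{x_1L(1)}(-x_1^{-2})^{L(0)}v,x_0)w_{(1)}\otimes w_{(2)})+\lambda(w_{(1)}\otimes Y_2(e^{x_1L(1)}(-x_1^{-2})^{L(0)}v,x_1^{-1})w_{(2)})$,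 where $\tau_{P(z)}(Y_t(v,x))=\sum_n\tau_{P(z)}(v\otimes t^n)x^{-n-1}$ and $v_n$ acts as $\tau_{P(z)}(v\otimes t^n)$. (It is known that $F^\vee(W_3')$ is a $V$-module under this action.) *)

theory Defs
  imports Complex_Main
begin

class cvs = ab_group_add +
  fixes cscale :: "complex \<Rightarrow> 'a \<Rightarrow> 'a"  (infixr "*\<^sub>C" 75)
  assumes cscale_add_right: "a *\<^sub>C (x + y) = a *\<^sub>C x + a *\<^sub>C y"
    and cscale_add_left: "(a + b) *\<^sub>C x = a *\<^sub>C x + b *\<^sub>C x"
    and cscale_cscale: "a *\<^sub>C (b *\<^sub>C x) = (a * b) *\<^sub>C x"
    and cscale_one: "1 *\<^sub>C x = x"

lemma cvs_vector_space: "vector_space (cscale :: complex \<Rightarrow> 'a::cvs \<Rightarrow> 'a)"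
  by unfold_locales (simp_all add: cscale_add_right cscale_add_left cscale_cscale cscale_one)

instantiation complex :: cvs
begin
definition cscale_complex :: "complex \<Rightarrow> complex \<Rightarrow> complex" where
  "cscale_complex a x = a * x"
instance by standard (simp_all add: cscale_complex_def algebra_simps)
end

abbreviation cspan :: "'a::cvs set \<Rightarrow> 'a set" where
  "cspan \<equiv> module.span cscale"

abbreviation csubspace :: "'a::cvs set \<Rightarrow> bool" where
  "csubspace \<equiv> module.subspace cscale"

definition fin_dim :: "'a::cvs set \<Rightarrow> bool" where
  "fin_dim S \<longleftrightarrow> (\<exists>B. finite B \<and> S \<subseteq> cspan B)"

definition clinear_on :: "'a::cvs set \<Rightarrow> ('a \<Rightarrow> 'b::cvs) \<Rightarrow> bool" where
  "clinear_on M f \<longleftrightarrow> (\<forall>x\<in>M. \<forall>y\<in>M. f (x + y) = f x + f y) \<and>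
                      (\<forall>a. \<forall>x\<in>M. f (a *\<^sub>C x) = a *\<^sub>C f x)"

definition dsum_decomp :: "'a::cvs set \<Rightarrow> ('i \<Rightarrow> 'a set) \<Rightarrow> bool" where
  "dsum_decomp M S \<longleftrightarrow> (\<forall>w\<in>M. \<exists>f. finite {k. f k \<noteq> 0} \<and> (\<forall>k. f k \<in> S k) \<and>
                              w = (\<Sum>k\<in>{k. f k \<noteq> 0}. f k))"

definition comp :: "('i \<Rightarrow> 'a::cvs set) \<Rightarrow> 'i \<Rightarrow> 'a \<Rightarrow> 'a" where
  "comp S i w = (THE u. \<exists>f. finite {k. f k \<noteq> 0} \<and> (\<forall>k. f k \<in> S k) \<and>
                           w = (\<Sum>k\<in>{k. f k \<noteq> 0}. f k) \<and> u = f i)"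

text \<open>A vertex operator (on V or on a module) is given by its modes:
  Y v n = v_n, i.e. Y(v,x) = sum_n v_n x^(-n-1).  L(n) = omega_(n+1).\<close>

definition Vgr :: "('v::cvs \<Rightarrow> int \<Rightarrow> 'v \<Rightarrow> 'v) \<Rightarrow> 'v \<Rightarrow> int \<Rightarrow> 'v set" where
  "Vgr Y om n = {v. Y om 1 v = of_int n *\<^sub>C v}"

definition Wgen :: "'w::cvs set \<Rightarrow> ('v \<Rightarrow> int \<Rightarrow> 'w \<Rightarrow> 'w) \<Rightarrow> 'v \<Rightarrow> complex \<Rightarrow> 'w set" where
  "Wgen M Y om n = {w\<in>M. \<exists>k. ((\<lambda>x. Y om 1 x - n *\<^sub>C x) ^^ k) w = 0}"

text \<open>The Jacobi identity, in its equivalent component form (Borcherds identity):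
  for all m n r,
  sum_(i>=0) (m choose i) (u_(r+i) v)_(m+n-i) w
   = sum_(i>=0) (-1)^i (r choose i) (u_(m+r-i) v_(n+i) w - (-1)^r v_(n+r-i) u_(m+i) w),
  where both sums are finite; any N beyond which all summands vanish computes them.\<close>
definition jacobi :: "('v::cvs \<Rightarrow> int \<Rightarrow> 'v \<Rightarrow> 'v) \<Rightarrow> 'w::cvs set \<Rightarrow> ('v \<Rightarrow> int \<Rightarrow> 'w \<Rightarrow> 'w) \<Rightarrow> bool" where
  "jacobi YV M YW \<longleftrightarrow> (\<forall>u v. \<forall>w\<in>M. \<forall>m n r :: int. \<forall>N :: nat.
     (\<forall>i\<ge>N. YV u (r + int i) v = 0 \<and> YW v (n + int i) w = 0 \<and> YW u (m + int i) w = 0) \<longrightarrow>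
     (\<Sum>i<N. (of_int m gchoose i) *\<^sub>C YW (YV u (r + int i) v) (m + n - int i) w)
     = (\<Sum>i<N. ((-1) ^ i * (of_int r gchoose i)) *\<^sub>C
          (YW u (m + r - int i) (YW v (n + int i) w)
           - ((-1) powi r) *\<^sub>C YW v (n + r - int i) (YW u (m + int i) w))))"

text \<open>Vertex operator algebra (V, Y, 1, omega) of central charge c (Lepowsky-Li / FHL):
  V the whole type.\<close>
definition VOA :: "('v::cvs \<Rightarrow> int \<Rightarrow> 'v \<Rightarrow> 'v) \<Rightarrow> 'v \<Rightarrow> 'v \<Rightarrow> complex \<Rightarrow> bool" where
  "VOA Y vac om c \<longleftrightarrow>
     (\<forall>n v. clinear_on UNIV (\<lambda>u. Y u n v)) \<and> (\<forall>u n. clinear_on UNIV (Y u n)) \<and>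
     (\<forall>u v. \<exists>N. \<forall>n\<ge>N. Y u n v = 0) \<and>
     dsum_decomp UNIV (Vgr Y om) \<and> (\<forall>n. fin_dim (Vgr Y om n)) \<and>
     (\<exists>N. \<forall>n<N. Vgr Y om n = {0}) \<and>
     (\<forall>n v. Y vac n v = (if n = -1 then v else 0)) \<and>
     (\<forall>v. (\<forall>n\<ge>0. Y v n vac = 0) \<and> Y v (-1) vac = v) \<and>
     jacobi Y UNIV Y \<and>
     (\<forall>m n :: int. \<forall>v. Y om (m + 1) (Y om (n + 1) v) - Y om (n + 1) (Y om (m + 1) v)
        = of_int (m - n) *\<^sub>C Y om (m + n + 1) v
          + (if m + n = 0 then (of_int (m ^ 3 - m) / 12 * c) *\<^sub>C v else 0)) \<and>
     (\<forall>v n. Y (Y om 0 v) n = (\<lambda>x. (- of_int n) *\<^sub>C Y v (n - 1) x))"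

definition gen_module ::
  "('v::cvs \<Rightarrow> int \<Rightarrow> 'v \<Rightarrow> 'v) \<Rightarrow> 'v \<Rightarrow> 'v \<Rightarrow> 'w::cvs set \<Rightarrow> ('v \<Rightarrow> int \<Rightarrow> 'w \<Rightarrow> 'w) \<Rightarrow> bool" where
  "gen_module YV vac om M YW \<longleftrightarrow>
     csubspace M \<and> (\<forall>v n. \<forall>w\<in>M. YW v n w \<in> M) \<and>
     (\<forall>n. \<forall>w\<in>M. clinear_on UNIV (\<lambda>v. YW v n w)) \<and> (\<forall>v n. clinear_on M (YW v n)) \<and>
     (\<forall>v. \<forall>w\<in>M. \<exists>N. \<forall>n\<ge>N. YW v n w = 0) \<and>
     (\<forall>n. \<forall>w\<in>M. YW vac n w = (if n = -1 then w else 0)) \<and>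
     jacobi YV M YW \<and>
     dsum_decomp M (Wgen M YW om) \<and> (\<forall>n. fin_dim (Wgen M YW om n)) \<and>
     (\<forall>n. \<exists>K. \<forall>k<K. Wgen M YW om (n + of_int k) = {0})"

definition ord_module ::
  "('v::cvs \<Rightarrow> int \<Rightarrow> 'v \<Rightarrow> 'v) \<Rightarrow> 'v \<Rightarrow> 'v \<Rightarrow> 'w::cvs set \<Rightarrow> ('v \<Rightarrow> int \<Rightarrow> 'w \<Rightarrow> 'w) \<Rightarrow> bool" where
  "ord_module YV vac om M YW \<longleftrightarrow> gen_module YV vac om M YW \<and>
     (\<forall>n. \<forall>w\<in>Wgen M YW om n. YW om 1 w = n *\<^sub>C w)"

text \<open>Elements of the completion overline W = prod_n W_[n] are families f with f n in W_[n].
  Action of v_m on overline W, componentwise.\<close>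
definition bar_act :: "'w::cvs set \<Rightarrow> ('v \<Rightarrow> int \<Rightarrow> 'w \<Rightarrow> 'w) \<Rightarrow> 'v \<Rightarrow> 'v \<Rightarrow> int
    \<Rightarrow> (complex \<Rightarrow> 'w) \<Rightarrow> (complex \<Rightarrow> 'w)" where
  "bar_act M YW om v m f = (\<lambda>k. \<Sum>n\<in>{n. comp (Wgen M YW om) k (YW v m (f n)) \<noteq> 0}.
                                    comp (Wgen M YW om) k (YW v m (f n)))"

text \<open>Contragredient W' = coprod_n W_[n]^*: linear functionals on M (extended by 0
  outside M) vanishing on all but finitely many W_[n].\<close>
definition contra :: "'w::cvs set \<Rightarrow> ('v \<Rightarrow> int \<Rightarrow> 'w \<Rightarrow> 'w) \<Rightarrow> 'v \<Rightarrow> ('w \<Rightarrow> complex) set" where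
  "contra M YW om = {\<alpha>. clinear_on M \<alpha> \<and> (\<forall>w. w \<notin> M \<longrightarrow> \<alpha> w = 0) \<and>
                       finite {n. \<exists>w\<in>Wgen M YW om n. \<alpha> w \<noteq> 0}}"

definition pair :: "('w::cvs \<Rightarrow> complex) \<Rightarrow> (complex \<Rightarrow> 'w) \<Rightarrow> complex" where
  "pair \<alpha> f = (\<Sum>n\<in>{n. \<alpha> (f n) \<noteq> 0}. \<alpha> (f n))"

text \<open>Action Y' on the contragredient: the coefficient of x^(-n-1) in
  <Y'(v,x) alpha, w> = <alpha, Y(e^(x L(1)) (-x^(-2))^L(0) v, x^(-1)) w>.
  For v in V_(h):  e^(xL(1))(-x^(-2))^L(0) v = (-1)^h sum_j x^(j-2h) L(1)^j v / j!.\<close>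
definition contra_act :: "('v::cvs \<Rightarrow> int \<Rightarrow> 'v \<Rightarrow> 'v) \<Rightarrow> 'v \<Rightarrow> 'w::cvs set
    \<Rightarrow> ('v \<Rightarrow> int \<Rightarrow> 'w \<Rightarrow> 'w) \<Rightarrow> 'v \<Rightarrow> int \<Rightarrow> ('w \<Rightarrow> complex) \<Rightarrow> ('w \<Rightarrow> complex)" where
  "contra_act YV om M YW v n \<alpha> = (\<lambda>w. if w \<in> M then
     (\<Sum>h\<in>{h. comp (Vgr YV om) h v \<noteq> 0}.
        \<Sum>j\<in>{j. (YV om 2 ^^ j) (comp (Vgr YV om) h v) \<noteq> 0}.
          ((-1) powi h / of_nat (fact j)) *
          \<alpha> (YW ((YV om 2 ^^ j) (comp (Vgr YV om) h v)) (2 * h - int j - n - 2) w))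
     else 0)"

text \<open>Quasi-P(z)-intertwining map of type (W3; W1 W2), F : W1 (x) W2 -> overline W3, given as
  a bilinear map.  Component form of
  Y3(v,x1) F(w1 (x) w2) - F(w1 (x) Y2(v,x1) w2)
    = Res_x0 z^(-1) delta((x1-x0)/z) F(Y1(v,x0) w1 (x) w2):
  coefficient of x1^(-n-1).\<close>
definition quasi_intw :: "('v::cvs \<Rightarrow> int \<Rightarrow> 'v \<Rightarrow> 'v) \<Rightarrow> 'v \<Rightarrow> complex
    \<Rightarrow> ('v \<Rightarrow> int \<Rightarrow> 'a::cvs \<Rightarrow> 'a) \<Rightarrow> ('v \<Rightarrow> int \<Rightarrow> 'b::cvs \<Rightarrow> 'b) \<Rightarrow> ('v \<Rightarrow> int \<Rightarrow> 'c::cvs \<Rightarrow> 'c)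
    \<Rightarrow> ('a \<Rightarrow> 'b \<Rightarrow> complex \<Rightarrow> 'c) \<Rightarrow> bool" where
  "quasi_intw YV om z Y1 Y2 Y3 F \<longleftrightarrow>
     (\<forall>w2 k. clinear_on UNIV (\<lambda>w1. F w1 w2 k)) \<and> (\<forall>w1 k. clinear_on UNIV (\<lambda>w2. F w1 w2 k)) \<and>
     (\<forall>w1 w2 k. F w1 w2 k \<in> Wgen UNIV Y3 om k) \<and>
     (\<forall>v w1 w2. \<forall>n::int. \<forall>N::nat. (\<forall>m\<ge>N. Y1 v (int m) w1 = 0) \<longrightarrow>
        (\<lambda>k. bar_act UNIV Y3 om v n (F w1 w2) k - F w1 (Y2 v n w2) k)
        = (\<lambda>k. \<Sum>m<N. (((of_int (int m - n - 1) gchoose m) * (-1) ^ m * z powi (n - int m))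
                         *\<^sub>C F (Y1 v (int m) w1) w2 k)))"

definition Fvee :: "('a \<Rightarrow> 'b \<Rightarrow> complex \<Rightarrow> 'c::cvs) \<Rightarrow> ('c \<Rightarrow> complex) \<Rightarrow> ('a \<Rightarrow> 'b \<Rightarrow> complex)" where
  "Fvee F \<alpha> = (\<lambda>w1 w2. pair \<alpha> (F w1 w2))"

text \<open>tau_P(z)(v (x) t^n) on (W1 (x) W2)^* (functionals given as bilinear forms):
  coefficient of x1^(-n-1) in the defining formula, for v decomposed into its
  homogeneous components v in V_(h) and
  e^(x1 L(1))(-x1^(-2))^L(0) v = (-1)^h sum_j x1^(j-2h) L(1)^j v / j!.\<close>
definition tau :: "('v::cvs \<Rightarrow> int \<Rightarrow> 'v \<Rightarrow> 'v) \<Rightarrow> 'v \<Rightarrow> complex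
    \<Rightarrow> ('v \<Rightarrow> int \<Rightarrow> 'a::cvs \<Rightarrow> 'a) \<Rightarrow> ('v \<Rightarrow> int \<Rightarrow> 'b::cvs \<Rightarrow> 'b)
    \<Rightarrow> 'v \<Rightarrow> int \<Rightarrow> ('a \<Rightarrow> 'b \<Rightarrow> complex) \<Rightarrow> ('a \<Rightarrow> 'b \<Rightarrow> complex)" where
  "tau YV om z Y1 Y2 v n lam = (\<lambda>w1 w2.
     \<Sum>h\<in>{h. comp (Vgr YV om) h v \<noteq> 0}.
       \<Sum>j\<in>{j. (YV om 2 ^^ j) (comp (Vgr YV om) h v) \<noteq> 0}.
         (let u = (YV om 2 ^^ j) (comp (Vgr YV om) h v) in
          ((-1) powi h / of_nat (fact j)) *
          ((\<Sum>m\<in>{m::nat. Y1 u (int m) w1 \<noteq> 0}.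
              (of_int (int m + int j - 2 * h + n + 1) gchoose m) * (-1) ^ m
              * z powi (2 * h - int j - int m - n - 2) * lam (Y1 u (int m) w1) w2)
           + lam w1 (Y2 u (2 * h - int j - n - 2) w2))))"

end

theory Submission
  imports Defs "HOL-Computational_Algebra.Computational_Algebra" "HOL-Computational_Algebra.Field_as_Ring"
begin

interpretation cv: vector_space "cscale :: complex \<Rightarrow> 'a::cvs \<Rightarrow> 'a"
  by (rule cvs_vector_space)

abbreviation lin :: "('a::cvs \<Rightarrow> 'b::cvs) \<Rightarrow> bool" where "lin f \<equiv> clinear_on UNIV f"

lemma cscale_0r[simp]: "a *\<^sub>C (0::'a::cvs) = 0" by (rule cv.scale_zero_right)
lemma cscale_0l[simp]: "0 *\<^sub>C (x::'a::cvs) = 0" by (rule cv.scale_zero_left)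
lemma cscale_1[simp]: "1 *\<^sub>C (x::'a::cvs) = x" by (rule cscale_one)
lemma cscale_complex[simp]: "a *\<^sub>C (x::complex) = a * x" by (simp add: cscale_complex_def)

lemma lin_add: "lin f \<Longrightarrow> f (x + y) = f x + f y" by (simp add: clinear_on_def)
lemma lin_scale: "lin f \<Longrightarrow> f (a *\<^sub>C x) = a *\<^sub>C f x" by (simp add: clinear_on_def)
lemma lin_0: "lin f \<Longrightarrow> f 0 = 0"
  by (metis add_cancel_right_right add_0 lin_add)
lemma lin_minus: "lin f \<Longrightarrow> f (- x) = - f x"
  by (metis add.right_inverse add_eq_0_iff lin_0 lin_add)
lemma lin_diff: "lin f \<Longrightarrow> f (x - y) = f x - f y"
  by (metis diff_conv_add_uminus lin_add lin_minus)
lemma lin_sum: "lin f \<Longrightarrow> f (sum g A) = (\<Sum>i\<in>A. f (g i))"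
  by (induction A rule: infinite_finite_induct) (auto simp: lin_0 lin_add)
lemma lin_iff: "lin f \<longleftrightarrow> (\<forall>x y. f (x + y) = f x + f y) \<and> (\<forall>a x. f (a *\<^sub>C x) = a *\<^sub>C f x)"
  by (simp add: clinear_on_def)
lemma lin_comp: "lin f \<Longrightarrow> lin g \<Longrightarrow> lin (\<lambda>x. f (g x))"
  by (simp add: lin_iff)
lemma lin_id: "lin (\<lambda>x. x)" by (simp add: lin_iff)
lemma lin_shift: assumes "lin T" shows "lin (\<lambda>x. T x - c *\<^sub>C x)"
  unfolding lin_iff
proof (intro conjI allI)
  fix x y show "T (x + y) - c *\<^sub>C (x + y) = T x - c *\<^sub>C x + (T y - c *\<^sub>C y)"
    using lin_add[OF assms] by (simp add: cscale_add_right)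
next
  fix a x show "T (a *\<^sub>C x) - c *\<^sub>C a *\<^sub>C x = a *\<^sub>C (T x - c *\<^sub>C x)"
    using lin_scale[OF assms] by (simp add: cv.scale_right_diff_distrib cscale_cscale mult.commute)
qed
lemma lin_iter: fixes T :: "'a::cvs \<Rightarrow> 'a" shows "lin T \<Longrightarrow> lin (T ^^ k)"
proof (induction k)
  case 0 show ?case by (simp add: clinear_on_def)
next
  case (Suc k) then show ?case by (simp add: clinear_on_def)
qed

lemma cscale_sum: "a *\<^sub>C sum g A = (\<Sum>i\<in>A. a *\<^sub>C (g i :: 'a::cvs))"
  by (induction A rule: infinite_finite_induct) (auto simp: cscale_add_right)
lemma cscale_minus_right: "a *\<^sub>C (- x) = - (a *\<^sub>C (x::'a::cvs))"
  by (rule cv.scale_minus_right)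
lemma cscale_diff_right: "a *\<^sub>C (x - y) = a *\<^sub>C x - a *\<^sub>C (y::'a::cvs)"
  by (rule cv.scale_right_diff_distrib)
lemma cscale_diff_left: "(a - b) *\<^sub>C x = a *\<^sub>C x - b *\<^sub>C (x::'a::cvs)"
  by (rule cv.scale_left_diff_distrib)

definition geig :: "('a::cvs \<Rightarrow> 'a) \<Rightarrow> complex \<Rightarrow> 'a set" where
  "geig T c = {x. \<exists>k. ((\<lambda>x. T x - c *\<^sub>C x) ^^ k) x = 0}"

lemma Wgen_UNIV: "Wgen UNIV Y om n = geig (Y om 1) n"
  by (simp add: Wgen_def geig_def)

lemma iter_more: fixes T :: "'a::cvs \<Rightarrow> 'a" shows "lin T \<Longrightarrow> (T ^^ k) x = 0 \<Longrightarrow> k \<le> m \<Longrightarrow> (T ^^ m) x = 0"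
proof -
  assume a: "lin T" "(T ^^ k) x = 0" "k \<le> m"
  then obtain d where "m = d + k" by (metis add.commute le_Suc_ex)
  then have "(T ^^ m) x = (T ^^ d) ((T ^^ k) x)" by (simp add: funpow_add)
  then show ?thesis using a lin_0[OF lin_iter[OF a(1)]] by simp
qed

lemma geig_0[simp]: "0 \<in> geig T c"
  unfolding geig_def by (rule CollectI[of _ 0], rule exI[of _ 0]) simp

lemma geig_add: "lin T \<Longrightarrow> x \<in> geig T c \<Longrightarrow> y \<in> geig T c \<Longrightarrow> x + y \<in> geig T c"
proof -
  assume l: "lin T" and x: "x \<in> geig T c" and y: "y \<in> geig T c"
  let ?S = "\<lambda>x. T x - c *\<^sub>C x"
  have ls: "lin ?S" using l by (rule lin_shift)
  from x obtain a where a: "(?S ^^ a) x = 0" by (auto simp: geig_def)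
  from y obtain b where b: "(?S ^^ b) y = 0" by (auto simp: geig_def)
  have "(?S ^^ (a + b)) x = 0" by (rule iter_more[OF ls a]) simp
  moreover have "(?S ^^ (a + b)) y = 0" by (rule iter_more[OF ls b]) simp
  ultimately have "(?S ^^ (a + b)) (x + y) = 0" using lin_add[OF lin_iter[OF ls]] by simp
  then show ?thesis by (auto simp: geig_def)
qed

lemma geig_scale: "lin T \<Longrightarrow> x \<in> geig T c \<Longrightarrow> a *\<^sub>C x \<in> geig T c"
proof -
  assume l: "lin T" and x: "x \<in> geig T c"
  let ?S = "\<lambda>x. T x - c *\<^sub>C x"
  have ls: "lin ?S" using l by (rule lin_shift)
  from x obtain k where "(?S ^^ k) x = 0" by (auto simp: geig_def)
  then have "(?S ^^ k) (a *\<^sub>C x) = 0" using lin_scale[OF lin_iter[OF ls]] by simp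
  then show ?thesis by (auto simp: geig_def)
qed

lemma geig_neg: "lin T \<Longrightarrow> x \<in> geig T c \<Longrightarrow> - x \<in> geig T c"
  using geig_scale[of T x c "-1"] cv.scale_minus_left[of 1 x] by simp

lemma geig_diff: "lin T \<Longrightarrow> x \<in> geig T c \<Longrightarrow> y \<in> geig T c \<Longrightarrow> x - y \<in> geig T c"
  by (metis diff_conv_add_uminus geig_add geig_neg)

lemma geig_sum: "lin T \<Longrightarrow> (\<And>i. i \<in> A \<Longrightarrow> g i \<in> geig T c) \<Longrightarrow> sum g A \<in> geig T c"
  by (induction A rule: infinite_finite_induct) (auto simp: geig_add)

lemma iter_comm: "(\<And>y. S (T y) = T (S y)) \<Longrightarrow> (S ^^ k) (T x) = T ((S ^^ k) x)"
  by (induction k) simp_all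

lemma shift_comm: "lin T \<Longrightarrow> ((\<lambda>x. T x - c *\<^sub>C x) ^^ k) (T x) = T (((\<lambda>x. T x - c *\<^sub>C x) ^^ k) x)"
  by (rule iter_comm) (simp add: lin_diff lin_scale)

lemma geig_T: "lin T \<Longrightarrow> x \<in> geig T c \<Longrightarrow> T x \<in> geig T c"
proof -
  assume l: "lin T" "x \<in> geig T c"
  then obtain k where "((\<lambda>x. T x - c *\<^sub>C x) ^^ k) x = 0" by (auto simp: geig_def)
  then have "((\<lambda>x. T x - c *\<^sub>C x) ^^ k) (T x) = 0" using shift_comm[OF l(1)] lin_0[OF l(1)] by simp
  then show ?thesis by (auto simp: geig_def)
qed

lemma geig_eig: "lin T \<Longrightarrow> T x = c *\<^sub>C x \<Longrightarrow> x \<in> geig T c"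
  unfolding geig_def by (rule CollectI, rule exI[of _ 1]) simp

lemma geig_shift_inj:
  assumes l: "lin T" and cd: "c \<noteq> d" and x: "x \<in> geig T d"
    and z: "((\<lambda>x. T x - c *\<^sub>C x) ^^ k) x = 0"
  shows "x = 0"
  using x z
proof (induction k arbitrary: x)
  case 0 then show ?case by simp
next
  case (Suc k)
  let ?S = "\<lambda>x. T x - c *\<^sub>C x"
  let ?R = "\<lambda>x. T x - d *\<^sub>C x"
  have "?S x \<in> geig T d" using Suc.prems l
    by (simp add: geig_diff geig_T geig_scale)
  moreover have "(?S ^^ k) (?S x) = 0" using Suc.prems(2) by (simp only: funpow_Suc_right comp_apply)
  ultimately have s0: "?S x = 0" using Suc.IH by blast
  then have Tx: "T x = c *\<^sub>C x" by simp
  have "\<And>m. (?R ^^ m) x = (c - d) ^ m *\<^sub>C x"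
  proof -
    fix m show "(?R ^^ m) x = (c - d) ^ m *\<^sub>C x"
      by (induction m) (simp_all add: lin_scale[OF l] Tx cscale_cscale cscale_diff_left[symmetric] mult.commute left_diff_distrib)
  qed
  moreover obtain m where "(?R ^^ m) x = 0" using Suc.prems(1) by (auto simp: geig_def)
  ultimately have "(c - d) ^ m *\<^sub>C x = 0" by simp
  then have "(inverse ((c - d) ^ m)) *\<^sub>C ((c - d) ^ m *\<^sub>C x) = 0" by simp
  then show "x = 0" using cd by (simp add: cscale_cscale)
qed

lemma geig_indep:
  assumes l: "lin T" and fin: "finite A" and inj: "inj_on g A"
    and mem: "\<And>k. k \<in> A \<Longrightarrow> f k \<in> geig T (g k)"
    and s: "(\<Sum>k\<in>A. f k) = 0"
  shows "\<forall>k\<in>A. f k = 0"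
  using fin inj mem s
proof (induction A arbitrary: f rule: finite_induct)
  case empty then show ?case by simp
next
  case (insert a A)
  let ?S = "\<lambda>x. T x - g a *\<^sub>C x"
  obtain k where k: "(?S ^^ k) (f a) = 0" using insert.prems(2) by (auto simp: geig_def)
  have ls: "lin (?S ^^ k)" using l by (simp add: lin_iter lin_shift)
  define f' where "f' i = (?S ^^ k) (f i)" for i
  have "(\<Sum>i\<in>A. f' i) = (?S ^^ k) (\<Sum>i\<in>insert a A. f i)"
    using insert.hyps k by (simp add: lin_add[OF ls] lin_sum[OF ls] f'_def)
  also have "\<dots> = 0" using insert.prems(3) lin_0[OF ls] by simp
  finally have s': "(\<Sum>i\<in>A. f' i) = 0" .
  have m': "f' i \<in> geig T (g i)" if "i \<in> A" for i
  proof -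
    have "lin (\<lambda>x. T x - g a *\<^sub>C x)" using l by (rule lin_shift)
    have "\<And>y m. y \<in> geig T (g i) \<Longrightarrow> (?S ^^ m) y \<in> geig T (g i)"
    proof -
      fix y m assume "y \<in> geig T (g i)"
      then show "(?S ^^ m) y \<in> geig T (g i)"
        by (induction m) (simp_all add: geig_diff geig_T geig_scale l)
    qed
    then show ?thesis using insert.prems(2) that by (simp add: f'_def)
  qed
  have "\<forall>i\<in>A. f' i = 0"
    by (rule insert.IH[OF _ m' s']) (use insert.prems in auto)
  then have z: "\<forall>i\<in>A. f i = 0"
  proof (intro ballI)
    fix i assume "\<forall>i\<in>A. f' i = 0" "i \<in> A"
    then have "g a \<noteq> g i" using insert.prems(1) insert.hyps by (auto simp: inj_on_def)
    then show "f i = 0" using geig_shift_inj[OF l _ insert.prems(2)[of i]] \<open>\<forall>i\<in>A. f' i = 0\<close> \<open>i \<in> A\<close>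
      by (auto simp: f'_def)
  qed
  then have "f a = 0" using insert.prems(3) insert.hyps by simp
  then show ?case using z by simp
qed

lemma sum_supp_eq:
  fixes f :: "'i \<Rightarrow> 'a::comm_monoid_add"
  assumes "finite A" "{k. f k \<noteq> 0} \<subseteq> A"
  shows "sum f {k. f k \<noteq> 0} = sum f A"
  using assms by (intro sum.mono_neutral_left) (auto intro: finite_subset)

lemma comp_eq:
  assumes l: "lin T" and inj: "inj g" and S: "\<And>k. S k \<subseteq> geig T (g k)"
    and fin: "finite {k. f k \<noteq> 0}" and fS: "\<And>k. f k \<in> S k"
    and w: "w = (\<Sum>k\<in>{k. f k \<noteq> 0}. f k)"
  shows "comp S i w = f i"
  unfolding comp_def
proof (rule the_equality)
  show "\<exists>f'. finite {k. f' k \<noteq> 0} \<and> (\<forall>k. f' k \<in> S k) \<and> w = (\<Sum>k\<in>{k. f' k \<noteq> 0}. f' k) \<and> f i = f' i"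
    using fin fS w by blast
next
  fix u assume "\<exists>f'. finite {k. f' k \<noteq> 0} \<and> (\<forall>k. f' k \<in> S k) \<and> w = (\<Sum>k\<in>{k. f' k \<noteq> 0}. f' k) \<and> u = f' i"
  then obtain f' where fin': "finite {k. f' k \<noteq> 0}" and fS': "\<forall>k. f' k \<in> S k"
    and w': "w = (\<Sum>k\<in>{k. f' k \<noteq> 0}. f' k)" and u: "u = f' i" by blast
  define A where "A = {k. f k \<noteq> 0} \<union> {k. f' k \<noteq> 0}"
  have finA: "finite A" using fin fin' by (simp add: A_def)
  have s1: "(\<Sum>k\<in>A. f k) = w" using w sum_supp_eq[OF finA, of f] by (simp add: A_def)
  have s2: "(\<Sum>k\<in>A. f' k) = w" using w' sum_supp_eq[OF finA, of f'] by (simp add: A_def)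
  have s: "(\<Sum>k\<in>A. f k - f' k) = 0" using s1 s2 by (simp add: sum_subtractf)
  have m: "\<And>k. k \<in> A \<Longrightarrow> f k - f' k \<in> geig T (g k)"
    using S fS fS' geig_diff[OF l] by blast
  have i: "inj_on g A" using inj by (simp add: inj_on_def inj_def)
  have z: "\<forall>k\<in>A. f k - f' k = 0" by (rule geig_indep[OF l finA i, of "\<lambda>k. f k - f' k", OF m s])
  show "u = f i"
  proof (cases "i \<in> A")
    case True then show ?thesis using z u by simp
  next
    case False then show ?thesis using u by (simp add: A_def)
  qed
qed

lemma comp_single:
  assumes l: "lin T" and inj: "inj g" and S: "\<And>k. S k \<subseteq> geig T (g k)"
    and S0: "\<And>k. 0 \<in> S k" and x: "x \<in> S c"
  shows "comp S i x = (if i = c then x else 0)"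
proof -
  define f where "f k = (if k = c then x else 0)" for k
  have supp: "{k. f k \<noteq> 0} = (if x = 0 then {} else {c})" by (auto simp: f_def)
  have "comp S i x = f i"
    by (rule comp_eq[OF l inj S]) (auto simp: supp f_def S0 x)
  then show ?thesis by (simp add: f_def)
qed

lemma comp_decomp:
  assumes l: "lin T" and inj: "inj g" and S: "\<And>k. S k \<subseteq> geig T (g k)"
    and d: "dsum_decomp UNIV S"
  shows "finite {k. comp S k w \<noteq> 0} \<and> (\<forall>k. comp S k w \<in> S k) \<and>
         w = (\<Sum>k\<in>{k. comp S k w \<noteq> 0}. comp S k w)"
proof -
  obtain f where f: "finite {k. f k \<noteq> 0}" "\<forall>k. f k \<in> S k" "w = (\<Sum>k\<in>{k. f k \<noteq> 0}. f k)"
    using d unfolding dsum_decomp_def by blast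
  have e: "\<And>k. comp S k w = f k" using f(2) by (intro comp_eq[OF l inj S f(1) _ f(3)]) blast
  show ?thesis unfolding e using f by blast
qed

lemma comp_add:
  assumes l: "lin T" and inj: "inj g" and S: "\<And>k. S k = geig T (g k)"
    and d: "dsum_decomp UNIV S"
  shows "comp S i (x + y) = comp S i x + comp S i y"
proof -
  have S': "\<And>k. S k \<subseteq> geig T (g k)" using S by simp
  note dx = comp_decomp[OF l inj S' d, of x] and dy = comp_decomp[OF l inj S' d, of y]
  define f where "f k = comp S k x + comp S k y" for k
  define U where "U = {k. comp S k x \<noteq> 0} \<union> {k. comp S k y \<noteq> 0}"
  have finU: "finite U" using dx dy by (simp add: U_def)
  have sub: "{k. f k \<noteq> 0} \<subseteq> U" by (auto simp: U_def f_def)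
  have "(\<Sum>k\<in>{k. f k \<noteq> 0}. f k) = (\<Sum>k\<in>U. f k)" by (rule sum_supp_eq[OF finU sub])
  also have "\<dots> = (\<Sum>k\<in>U. comp S k x) + (\<Sum>k\<in>U. comp S k y)" by (simp add: f_def sum.distrib)
  also have "(\<Sum>k\<in>U. comp S k x) = x"
    using dx sum_supp_eq[OF finU, of "\<lambda>k. comp S k x"] by (simp add: U_def)
  also have "(\<Sum>k\<in>U. comp S k y) = y"
    using dy sum_supp_eq[OF finU, of "\<lambda>k. comp S k y"] by (simp add: U_def)
  finally have e: "x + y = (\<Sum>k\<in>{k. f k \<noteq> 0}. f k)" by simp
  have "comp S i (x + y) = f i"
    by (rule comp_eq[OF l inj S' _ _ e]) (use finU sub dx dy S geig_add[OF l] f_def in \<open>auto intro: finite_subset\<close>)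
  then show ?thesis by (simp add: f_def)
qed

lemma comp_scale:
  assumes l: "lin T" and inj: "inj g" and S: "\<And>k. S k = geig T (g k)"
    and d: "dsum_decomp UNIV S"
  shows "comp S i (a *\<^sub>C x) = a *\<^sub>C comp S i x"
proof -
  have S': "\<And>k. S k \<subseteq> geig T (g k)" using S by simp
  note dx = comp_decomp[OF l inj S' d, of x]
  define f where "f k = a *\<^sub>C comp S k x" for k
  define U where "U = {k. comp S k x \<noteq> 0}"
  have finU: "finite U" using dx by (simp add: U_def)
  have sub: "{k. f k \<noteq> 0} \<subseteq> U" by (auto simp: U_def f_def)
  have "(\<Sum>k\<in>{k. f k \<noteq> 0}. f k) = (\<Sum>k\<in>U. f k)" by (rule sum_supp_eq[OF finU sub])
  also have "\<dots> = a *\<^sub>C (\<Sum>k\<in>U. comp S k x)" by (simp add: f_def cscale_sum)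
  also have "(\<Sum>k\<in>U. comp S k x) = x" using dx by (simp add: U_def)
  finally have e: "a *\<^sub>C x = (\<Sum>k\<in>{k. f k \<noteq> 0}. f k)" by simp
  have "comp S i (a *\<^sub>C x) = f i"
    by (rule comp_eq[OF l inj S' _ _ e]) (use finU sub dx S geig_scale[OF l] f_def in \<open>auto intro: finite_subset\<close>)
  then show ?thesis by (simp add: f_def)
qed

lemma comp_lin:
  assumes l: "lin T" and inj: "inj g" and S: "\<And>k. S k = geig T (g k)"
    and d: "dsum_decomp UNIV S"
  shows "lin (comp S i)"
  using comp_add[OF assms] comp_scale[OF assms] by (simp add: lin_iff)

lemma gm_lin: "gen_module YV vac om UNIV Y \<Longrightarrow> lin (Y v n)"
  by (simp add: gen_module_def)
lemma gm_linv: "gen_module YV vac om UNIV Y \<Longrightarrow> lin (\<lambda>v. Y v n w)"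
  by (simp add: gen_module_def)
lemma gm_trunc: "gen_module YV vac om UNIV Y \<Longrightarrow> \<exists>N. \<forall>n\<ge>N. Y v n w = 0"
  by (simp add: gen_module_def)
lemma gm_vac: "gen_module YV vac om UNIV Y \<Longrightarrow> Y vac n w = (if n = -1 then w else 0)"
  by (simp add: gen_module_def)
lemma gm_dsum: "gen_module YV vac om UNIV Y \<Longrightarrow> dsum_decomp UNIV (Wgen UNIV Y om)"
  by (simp add: gen_module_def)
lemma gm_jac:
  assumes "gen_module YV vac om UNIV Y"
    and "\<forall>i\<ge>N. YV u (r + int i) v = 0 \<and> Y v (n + int i) w = 0 \<and> Y u (m + int i) w = 0"
  shows "(\<Sum>i<N. (of_int m gchoose i) *\<^sub>C Y (YV u (r + int i) v) (m + n - int i) w)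
     = (\<Sum>i<N. ((-1) ^ i * (of_int r gchoose i)) *\<^sub>C
          (Y u (m + r - int i) (Y v (n + int i) w)
           - ((-1) powi r) *\<^sub>C Y v (n + r - int i) (Y u (m + int i) w)))"
  using assms unfolding gen_module_def jacobi_def by blast

lemma trunc_nat: "\<exists>N::int. \<forall>n\<ge>N. Y v n w = 0 \<Longrightarrow> \<exists>N::nat. \<forall>i\<ge>N. Y v (a + int i) w = 0"
proof -
  assume "\<exists>N::int. \<forall>n\<ge>N. Y v n w = 0"
  then obtain N :: int where N: "\<forall>n\<ge>N. Y v n w = 0" by blast
  show ?thesis by (rule exI[of _ "nat (N - a)"]) (use N in auto)
qed

lemma sum_lt2: fixes g :: "nat \<Rightarrow> 'a::comm_monoid_add" shows "2 \<le> N \<Longrightarrow> (\<And>i. 2 \<le> i \<Longrightarrow> g i = 0) \<Longrightarrow> (\<Sum>i<N. g i) = g 0 + g 1"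
proof -
  assume N: "2 \<le> N" and z: "\<And>i. 2 \<le> i \<Longrightarrow> g i = 0"
  have "(\<Sum>i<N. g i) = (\<Sum>i<2. g i)"
    by (rule sum.mono_neutral_right) (use N z in auto)
  also have "\<dots> = g 0 + g 1" by (simp add: numeral_2_eq_2)
  finally show ?thesis .
qed

lemma sum_lt1: fixes g :: "nat \<Rightarrow> 'a::comm_monoid_add" shows "1 \<le> N \<Longrightarrow> (\<And>i. 1 \<le> i \<Longrightarrow> g i = 0) \<Longrightarrow> (\<Sum>i<N. g i) = g 0"
proof -
  assume N: "1 \<le> N" and z: "\<And>i. 1 \<le> i \<Longrightarrow> g i = 0"
  have "(\<Sum>i<N. g i) = (\<Sum>i<1. g i)"
    by (rule sum.mono_neutral_right) (use N z in auto)
  then show ?thesis by simp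
qed

lemma gm_trunc_nat: "gen_module YV vac om UNIV Y \<Longrightarrow> \<exists>N::nat. \<forall>i\<ge>N. Y v (a + int i) w = 0"
  by (rule trunc_nat) (rule gm_trunc)

lemma iter_intertw: "(\<And>y. S (Q y) = Q (R y)) \<Longrightarrow> (S ^^ k) (Q x) = Q ((R ^^ k) x)"
  by (induction k) simp_all

locale mt =
  fixes YV :: "'v::cvs \<Rightarrow> int \<Rightarrow> 'v \<Rightarrow> 'v" and vac om :: 'v and c z :: complex
    and Y1 :: "'v \<Rightarrow> int \<Rightarrow> 'a::cvs \<Rightarrow> 'a"
    and Y2 :: "'v \<Rightarrow> int \<Rightarrow> 'b::cvs \<Rightarrow> 'b"
    and Y3 :: "'v \<Rightarrow> int \<Rightarrow> 'c::cvs \<Rightarrow> 'c"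
    and F :: "'a \<Rightarrow> 'b \<Rightarrow> complex \<Rightarrow> 'c"
  assumes voa: "VOA YV vac om c"
    and gm1: "gen_module YV vac om UNIV Y1"
    and gm2: "gen_module YV vac om UNIV Y2"
    and gm3: "gen_module YV vac om UNIV Y3"
    and qi: "quasi_intw YV om z Y1 Y2 Y3 F"
begin

lemma V_lin: "lin (YV u n)" using voa by (simp add: VOA_def)
lemma V_linv: "lin (\<lambda>u. YV u n v)" using voa by (simp add: VOA_def)
lemma V_trunc: "\<exists>N. \<forall>n\<ge>N. YV u n v = 0" using voa by (simp add: VOA_def)
lemma V_trunc_nat: "\<exists>N::nat. \<forall>i\<ge>N. YV u (a + int i) v = 0" by (rule trunc_nat) (rule V_trunc)
lemma V_dsum: "dsum_decomp UNIV (Vgr YV om)" using voa by (simp add: VOA_def)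
lemma V_low: "\<exists>N. \<forall>n<N. Vgr YV om n = {0}" using voa by (simp add: VOA_def)
lemma V_cre0: "0 \<le> n \<Longrightarrow> YV v n vac = 0" using voa by (simp add: VOA_def)
lemma V_cre: "YV v (-1) vac = v" using voa by (simp add: VOA_def)
lemma V_vir: "YV om (m + 1) (YV om (n + 1) v) - YV om (n + 1) (YV om (m + 1) v)
        = of_int (m - n) *\<^sub>C YV om (m + n + 1) v
          + (if m + n = 0 then (of_int (m ^ 3 - m) / 12 * c) *\<^sub>C v else 0)"
  using voa unfolding VOA_def by blast
lemma V_der: "YV (YV om 0 v) n = (\<lambda>x. (- of_int n) *\<^sub>C YV v (n - 1) x)"
  using voa unfolding VOA_def by blast

abbreviation L3 where "L3 \<equiv> Y3 om 1"
abbreviation LV where "LV \<equiv> YV om 1"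

lemma L3_lin: "lin L3" by (rule gm_lin[OF gm3])
lemma LV_lin: "lin LV" by (rule V_lin)
lemma Y3_lin: "lin (Y3 v n)" by (rule gm_lin[OF gm3])
lemma Y3_linv: "lin (\<lambda>v. Y3 v n w)" by (rule gm_linv[OF gm3])

lemma W3_eq: "Wgen UNIV Y3 om = (\<lambda>k. geig L3 k)"
  by (rule ext) (simp add: Wgen_UNIV)

lemma Vgr_sub: "Vgr YV om h \<subseteq> geig LV (of_int h)"
  by (auto simp: Vgr_def intro: geig_eig[OF LV_lin])
lemma Vgr_0: "0 \<in> Vgr YV om h" by (simp add: Vgr_def lin_0[OF LV_lin])

lemma inj_of_int_c: "inj (of_int :: int \<Rightarrow> complex)" by (simp add: inj_def)
lemma inj_id: "inj (\<lambda>x::complex. x)" by (simp add: inj_def)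

lemma compV: "finite {h. comp (Vgr YV om) h v \<noteq> 0} \<and> (\<forall>h. comp (Vgr YV om) h v \<in> Vgr YV om h) \<and>
         v = (\<Sum>h\<in>{h. comp (Vgr YV om) h v \<noteq> 0}. comp (Vgr YV om) h v)"
  by (rule comp_decomp[OF LV_lin inj_of_int_c Vgr_sub V_dsum])

lemma comp3: "finite {k. comp (Wgen UNIV Y3 om) k w \<noteq> 0} \<and> (\<forall>k. comp (Wgen UNIV Y3 om) k w \<in> Wgen UNIV Y3 om k) \<and>
         w = (\<Sum>k\<in>{k. comp (Wgen UNIV Y3 om) k w \<noteq> 0}. comp (Wgen UNIV Y3 om) k w)"
  by (rule comp_decomp[OF L3_lin inj_id _ gm_dsum[OF gm3]]) (simp add: W3_eq)

lemma comp3_lin: "lin (comp (Wgen UNIV Y3 om) k)"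
  by (rule comp_lin[OF L3_lin inj_id _ gm_dsum[OF gm3]]) (simp add: W3_eq)

lemma comp3_single: "x \<in> Wgen UNIV Y3 om a \<Longrightarrow> comp (Wgen UNIV Y3 om) k x = (if k = a then x else 0)"
  by (rule comp_single[OF L3_lin inj_id]) (simp_all add: W3_eq)

lemma om_cre: "YV om (-1) vac = om" by (rule V_cre)

lemma om0: "YV om 0 v = YV v (-2) vac"
proof -
  have "YV (YV om 0 v) (-1) vac = (- of_int (-1)) *\<^sub>C YV v (-1 - 1) vac" by (simp add: V_der)
  then show ?thesis by (simp add: V_cre)
qed

lemma Y3_der: "Y3 (YV v (-2) vac) m w = - (of_int m *\<^sub>C Y3 v (m - 1) w)"
proof -
  obtain N0 where N0: "\<forall>i\<ge>N0. Y3 v (m + int i) w = 0" using gm_trunc_nat[OF gm3] by blast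
  define N where "N = max 2 N0"
  have cond: "\<forall>i\<ge>N. YV v (-2 + int i) vac = 0 \<and> Y3 vac (0 + int i) w = 0 \<and> Y3 v (m + int i) w = 0"
    using N0 by (auto simp: N_def gm_vac[OF gm3] intro!: V_cre0)
  note J = gm_jac[OF gm3 cond]
  have R: "(\<Sum>i<N. ((-1) ^ i * (of_int (-2) gchoose i)) *\<^sub>C
          (Y3 v (m + -2 - int i) (Y3 vac (0 + int i) w)
           - ((-1) powi -2) *\<^sub>C Y3 vac (0 + -2 - int i) (Y3 v (m + int i) w))) = 0"
    by (rule sum.neutral) (simp add: gm_vac[OF gm3] lin_0[OF Y3_lin])
  have L: "(\<Sum>i<N. (of_int m gchoose i) *\<^sub>C Y3 (YV v (-2 + int i) vac) (m + 0 - int i) w)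
      = Y3 (YV v (-2) vac) m w + of_int m *\<^sub>C Y3 v (m - 1) w"
    by (subst sum_lt2) (auto simp: N_def V_cre V_cre0 lin_0[OF Y3_linv])
  from J R L have "Y3 (YV v (-2) vac) m w + of_int m *\<^sub>C Y3 v (m - 1) w = 0" by simp
  then show ?thesis by (simp add: eq_neg_iff_add_eq_0)
qed

lemma gb1: "i \<ge> 2 \<Longrightarrow> ((1::complex) gchoose i) = 0"
  using binomial_gbinomial[of 1 i, where 'a=complex] by (simp add: binomial_eq_0)

lemma commL3: "L3 (Y3 v n w) - Y3 v n (L3 w) = Y3 (YV om 0 v) (n + 1) w + Y3 (YV om 1 v) n w"
proof -
  obtain N1 where N1: "\<forall>i\<ge>N1. YV om (0 + int i) v = 0" using V_trunc_nat by blast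
  obtain N2 where N2: "\<forall>i\<ge>N2. Y3 v (n + int i) w = 0" using gm_trunc_nat[OF gm3] by blast
  obtain N3 where N3: "\<forall>i\<ge>N3. Y3 om (1 + int i) w = 0" using gm_trunc_nat[OF gm3] by blast
  define N where "N = max 2 (max N1 (max N2 N3))"
  have cond: "\<forall>i\<ge>N. YV om (0 + int i) v = 0 \<and> Y3 v (n + int i) w = 0 \<and> Y3 om (1 + int i) w = 0"
    using N1 N2 N3 by (auto simp: N_def)
  note J = gm_jac[OF gm3 cond]
  have R: "(\<Sum>i<N. ((-1) ^ i * (of_int 0 gchoose i)) *\<^sub>C
          (Y3 om (1 + 0 - int i) (Y3 v (n + int i) w)
           - ((-1) powi 0) *\<^sub>C Y3 v (n + 0 - int i) (Y3 om (1 + int i) w)))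
       = L3 (Y3 v n w) - Y3 v n (L3 w)"
    by (subst sum_lt1) (auto simp: N_def gbinomial_0_left)
  have L: "(\<Sum>i<N. (of_int 1 gchoose i) *\<^sub>C Y3 (YV om (0 + int i) v) (1 + n - int i) w)
      = Y3 (YV om 0 v) (n + 1) w + Y3 (YV om 1 v) n w"
    by (subst sum_lt2) (auto simp: N_def gb1 add.commute)
  from J R L show ?thesis by simp
qed

lemma commL3_hom: "v \<in> Vgr YV om h \<Longrightarrow>
  L3 (Y3 v n w) = Y3 v n (L3 w) + (of_int h - of_int n - 1) *\<^sub>C Y3 v n w"
proof -
  assume v: "v \<in> Vgr YV om h"
  have "Y3 (YV om 1 v) n w = of_int h *\<^sub>C Y3 v n w"
    using v lin_scale[OF Y3_linv] by (simp add: Vgr_def)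
  moreover have "Y3 (YV om 0 v) (n + 1) w = - (of_int (n + 1) *\<^sub>C Y3 v n w)"
    by (simp add: om0 Y3_der)
  ultimately have "L3 (Y3 v n w) - Y3 v n (L3 w) = of_int h *\<^sub>C Y3 v n w - of_int (n + 1) *\<^sub>C Y3 v n w"
    using commL3[of v n w] by simp
  also have "\<dots> = (of_int h - of_int n - 1) *\<^sub>C Y3 v n w"
    by (simp add: cscale_diff_left[symmetric] algebra_simps)
  finally show ?thesis by (simp add: algebra_simps)
qed

lemma shift3:
  assumes v: "v \<in> Vgr YV om h" and x: "x \<in> geig L3 a"
  shows "Y3 v n x \<in> geig L3 (a + of_int (h - n - 1))"
proof -
  let ?a' = "a + of_int (h - n - 1)"
  have st: "L3 (Y3 v n y) - ?a' *\<^sub>C Y3 v n y = Y3 v n (L3 y - a *\<^sub>C y)" for y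
  proof -
    have "L3 (Y3 v n y) - ?a' *\<^sub>C Y3 v n y
        = Y3 v n (L3 y) + ((of_int h - of_int n - 1) *\<^sub>C Y3 v n y - ?a' *\<^sub>C Y3 v n y)"
      using commL3_hom[OF v] by (simp add: algebra_simps)
    also have "(of_int h - of_int n - 1) *\<^sub>C Y3 v n y - ?a' *\<^sub>C Y3 v n y = - (a *\<^sub>C Y3 v n y)"
    proof -
      have "(of_int h - of_int n - 1) *\<^sub>C Y3 v n y - ?a' *\<^sub>C Y3 v n y
          = ((of_int h - of_int n - 1) - ?a') *\<^sub>C Y3 v n y" by (rule cscale_diff_left[symmetric])
      also have "(of_int h - of_int n - 1) - ?a' = - a" by simp
      finally show ?thesis by (simp only: cv.scale_minus_left)
    qed
    finally show ?thesis by (simp add: lin_diff[OF Y3_lin] lin_scale[OF Y3_lin])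
  qed
  obtain k where k: "((\<lambda>y. L3 y - a *\<^sub>C y) ^^ k) x = 0" using x by (auto simp: geig_def)
  have "((\<lambda>y. L3 y - ?a' *\<^sub>C y) ^^ k) (Y3 v n x) = Y3 v n (((\<lambda>y. L3 y - a *\<^sub>C y) ^^ k) x)"
    by (rule iter_intertw) (rule st)
  then have "((\<lambda>y. L3 y - ?a' *\<^sub>C y) ^^ k) (Y3 v n x) = 0" using k lin_0[OF Y3_lin] by simp
  then show ?thesis by (auto simp: geig_def)
qed

lemma L1_low: "v \<in> Vgr YV om h \<Longrightarrow> YV om 2 v \<in> Vgr YV om (h - 1)"
proof -
  assume v: "v \<in> Vgr YV om h"
  have "YV om (0 + 1) (YV om (1 + 1) v) - YV om (1 + 1) (YV om (0 + 1) v)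
        = of_int (0 - 1) *\<^sub>C YV om (0 + 1 + 1) v
          + (if (0::int) + 1 = 0 then (of_int (0 ^ 3 - 0) / 12 * c) *\<^sub>C v else 0)"
    by (rule V_vir)
  then have "LV (YV om 2 v) - YV om 2 (of_int h *\<^sub>C v) = - (YV om 2 v)"
    using v by (simp add: Vgr_def cv.scale_minus_left)
  then have "LV (YV om 2 v) = of_int h *\<^sub>C YV om 2 v - YV om 2 v"
    by (simp add: lin_scale[OF V_lin] algebra_simps)
  also have "\<dots> = of_int (h - 1) *\<^sub>C YV om 2 v"
    by (simp add: cscale_diff_left)
  finally show ?thesis by (simp add: Vgr_def)
qed

lemma L1_iter: "v \<in> Vgr YV om h \<Longrightarrow> (YV om 2 ^^ j) v \<in> Vgr YV om (h - int j)"
proof (induction j)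
  case 0 then show ?case by simp
next
  case (Suc j)
  then have "YV om 2 ((YV om 2 ^^ j) v) \<in> Vgr YV om (h - int j - 1)" by (intro L1_low) simp
  then show ?case by (simp add: algebra_simps)
qed

lemma L1_fin: "v \<in> Vgr YV om h \<Longrightarrow> finite {j. (YV om 2 ^^ j) v \<noteq> 0}"
proof -
  assume v: "v \<in> Vgr YV om h"
  obtain N where N: "\<forall>n<N. Vgr YV om n = {0}" using V_low by blast
  have "{j. (YV om 2 ^^ j) v \<noteq> 0} \<subseteq> {..nat (h - N)}"
  proof
    fix j assume "j \<in> {j. (YV om 2 ^^ j) v \<noteq> 0}"
    then have nz: "(YV om 2 ^^ j) v \<noteq> 0" by simp
    have "\<not> h - int j < N"
    proof
      assume "h - int j < N"
      then have "Vgr YV om (h - int j) = {0}" using N by blast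
      then show False using L1_iter[OF v, of j] nz by simp
    qed
    then show "j \<in> {..nat (h - N)}" by simp
  qed
  then show ?thesis by (rule finite_subset) simp
qed

lemma om_wt: "om \<in> Vgr YV om 2"
proof -
  have "YV om (0 + 1) (YV om (-2 + 1) vac) - YV om (-2 + 1) (YV om (0 + 1) vac)
        = of_int (0 - (-2)) *\<^sub>C YV om (0 + -2 + 1) vac
          + (if (0::int) + -2 = 0 then (of_int (0 ^ 3 - 0) / 12 * c) *\<^sub>C vac else 0)"
    by (rule V_vir)
  then have "LV om = 2 *\<^sub>C om"
    by (simp add: V_cre V_cre0 lin_0[OF V_lin])
  then show ?thesis by (simp add: Vgr_def)
qed

end

context mt begin

lemma F_lin1: "lin (\<lambda>w1. F w1 w2 k)" using qi by (simp add: quasi_intw_def)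
lemma F_lin2: "lin (\<lambda>w2. F w1 w2 k)" using qi by (simp add: quasi_intw_def)
lemma F_gr: "F w1 w2 k \<in> geig L3 k" using qi by (simp add: quasi_intw_def Wgen_UNIV)
lemma F_gr': "F w1 w2 k \<in> Wgen UNIV Y3 om k" using F_gr by (simp add: Wgen_UNIV)

definition qc :: "int \<Rightarrow> nat \<Rightarrow> complex" where
  "qc n m = (of_int (int m - n - 1) gchoose m) * (-1) ^ m * z powi (n - int m)"

lemma qi_eq: "(\<forall>m\<ge>N. Y1 v (int m) w1 = 0) \<Longrightarrow>
  bar_act UNIV Y3 om v n (F w1 w2) k - F w1 (Y2 v n w2) k
   = (\<Sum>m<N. qc n m *\<^sub>C F (Y1 v (int m) w1) w2 k)"
proof -
  assume a: "\<forall>m\<ge>N. Y1 v (int m) w1 = 0"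
  have "(\<lambda>k. bar_act UNIV Y3 om v n (F w1 w2) k - F w1 (Y2 v n w2) k)
        = (\<lambda>k. \<Sum>m<N. (((of_int (int m - n - 1) gchoose m) * (-1) ^ m * z powi (n - int m))
                         *\<^sub>C F (Y1 v (int m) w1) w2 k))"
    using qi a unfolding quasi_intw_def by blast
  then show ?thesis unfolding qc_def by meson
qed

lemma Y1_trunc: "\<exists>N::nat. \<forall>m\<ge>N. Y1 v (int m) w1 = 0"
  using gm_trunc_nat[OF gm1, of v 0 w1] by simp

lemma bar_hom:
  assumes u: "u \<in> Vgr YV om d" and f: "\<And>k. f k \<in> geig L3 k"
  shows "bar_act UNIV Y3 om u p f k = Y3 u p (f (k - of_int (d - p - 1)))"
proof -
  define s where "s = (of_int (d - p - 1) :: complex)"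
  have e: "comp (Wgen UNIV Y3 om) k (Y3 u p (f n)) = (if n = k - s then Y3 u p (f n) else 0)" for n
  proof -
    have "Y3 u p (f n) \<in> Wgen UNIV Y3 om (n + s)"
      using shift3[OF u f[of n], of p] by (simp add: Wgen_UNIV s_def)
    then have "comp (Wgen UNIV Y3 om) k (Y3 u p (f n)) = (if k = n + s then Y3 u p (f n) else 0)"
      by (rule comp3_single)
    moreover have "(k = n + s) = (n = k - s)" by auto
    ultimately show ?thesis by simp
  qed
  have "bar_act UNIV Y3 om u p f k
      = (\<Sum>n\<in>{n. (if n = k - s then Y3 u p (f n) else 0) \<noteq> 0}. (if n = k - s then Y3 u p (f n) else 0))"
    unfolding bar_act_def e ..
  also have "{n. (if n = k - s then Y3 u p (f n) else 0) \<noteq> 0} = (if Y3 u p (f (k - s)) = 0 then {} else {k - s})"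
    by auto
  finally show ?thesis by (simp add: s_def)
qed

definition Wsp :: "'c set" where "Wsp = cspan {F w1 w2 k | w1 w2 k. True}"

lemma F_in_W: "F w1 w2 k \<in> Wsp"
  unfolding Wsp_def by (rule cv.span_base) blast

lemma W_0: "0 \<in> Wsp" unfolding Wsp_def by (rule cv.span_zero)
lemma W_add: "x \<in> Wsp \<Longrightarrow> y \<in> Wsp \<Longrightarrow> x + y \<in> Wsp" unfolding Wsp_def by (rule cv.span_add)
lemma W_scale: "x \<in> Wsp \<Longrightarrow> a *\<^sub>C x \<in> Wsp" unfolding Wsp_def by (rule cv.span_scale)
lemma W_sum: "(\<And>i. i \<in> A \<Longrightarrow> g i \<in> Wsp) \<Longrightarrow> sum g A \<in> Wsp" unfolding Wsp_def by (rule cv.span_sum)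

lemma W_induct:
  assumes x: "x \<in> Wsp" and h0: "P 0"
    and hS: "\<And>a w1 w2 k y. P y \<Longrightarrow> P (a *\<^sub>C F w1 w2 k + y)"
  shows "P x"
  using x unfolding Wsp_def
  by (induction rule: cv.span_induct_alt) (use h0 hS in auto)

lemma lin_W: "lin f \<Longrightarrow> (\<And>w1 w2 k. f (F w1 w2 k) \<in> Wsp) \<Longrightarrow> x \<in> Wsp \<Longrightarrow> f x \<in> Wsp"
proof -
  assume l: "lin f" and b: "\<And>w1 w2 k. f (F w1 w2 k) \<in> Wsp" and x: "x \<in> Wsp"
  show ?thesis
    by (rule W_induct[OF x]) (simp_all add: lin_0[OF l] lin_add[OF l] lin_scale[OF l] W_0 W_add W_scale b)
qed

lemma Y3_hom_F: "u \<in> Vgr YV om h \<Longrightarrow> Y3 u n (F w1 w2 k) \<in> Wsp"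
proof -
  assume u: "u \<in> Vgr YV om h"
  define s where "s = (of_int (h - n - 1) :: complex)"
  obtain N where N: "\<forall>m\<ge>N. Y1 u (int m) w1 = 0" using Y1_trunc by blast
  have "bar_act UNIV Y3 om u n (F w1 w2) (k + s) = Y3 u n (F w1 w2 (k + s - s))"
    unfolding s_def by (rule bar_hom[OF u F_gr])
  then have "Y3 u n (F w1 w2 k) = F w1 (Y2 u n w2) (k + s) + (\<Sum>m<N. qc n m *\<^sub>C F (Y1 u (int m) w1) w2 (k + s))"
    using qi_eq[OF N, of n w2 "k + s"] by (simp add: algebra_simps)
  also have "\<dots> \<in> Wsp" by (intro W_add W_sum W_scale F_in_W)
  finally show ?thesis .
qed

lemma Y3_W: "w \<in> Wsp \<Longrightarrow> Y3 v n w \<in> Wsp"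
proof -
  assume w: "w \<in> Wsp"
  let ?H = "{h. comp (Vgr YV om) h v \<noteq> 0}"
  have hom: "Y3 (comp (Vgr YV om) h v) n w \<in> Wsp" for h
    by (rule lin_W[OF Y3_lin _ w]) (rule Y3_hom_F, use compV in blast)
  have "Y3 v n w = (\<lambda>v. Y3 v n w) (\<Sum>h\<in>?H. comp (Vgr YV om) h v)"
    using arg_cong[where f="\<lambda>v. Y3 v n w", OF conjunct2[OF conjunct2[OF compV]]] by simp
  also have "\<dots> = (\<Sum>h\<in>?H. Y3 (comp (Vgr YV om) h v) n w)" by (rule lin_sum[OF Y3_linv])
  also have "\<dots> \<in> Wsp" by (rule W_sum) (rule hom)
  finally show ?thesis .
qed

lemma comp3_W: "w \<in> Wsp \<Longrightarrow> comp (Wgen UNIV Y3 om) k w \<in> Wsp"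
  by (rule lin_W[OF comp3_lin]) (simp_all add: comp3_single[OF F_gr'] F_in_W W_0)

lemma Wgen_W: "Wgen Wsp Y3 om k = Wsp \<inter> Wgen UNIV Y3 om k"
  by (auto simp: Wgen_def)

lemma jac_sub: "jacobi YV UNIV Y \<Longrightarrow> jacobi YV M Y"
  unfolding jacobi_def Ball_def by fast

lemma gen_W: "gen_module YV vac om Wsp Y3"
  unfolding gen_module_def
proof (intro conjI allI ballI)
  show "csubspace Wsp" unfolding Wsp_def by (rule cv.subspace_span)
next
  fix v n w assume "w \<in> Wsp" then show "Y3 v n w \<in> Wsp" by (rule Y3_W)
next
  fix n w show "clinear_on UNIV (\<lambda>v. Y3 v n w)" by (rule Y3_linv)
next
  fix v n show "clinear_on Wsp (Y3 v n)" using Y3_lin by (simp add: clinear_on_def)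
next
  fix v w show "\<exists>N. \<forall>n\<ge>N. Y3 v n w = 0" by (rule gm_trunc[OF gm3])
next
  fix n w show "Y3 vac n w = (if n = -1 then w else 0)" by (rule gm_vac[OF gm3])
next
  have "jacobi YV UNIV Y3" using gm3 by (simp add: gen_module_def)
  then show "jacobi YV Wsp Y3" by (rule jac_sub)
next
  show "dsum_decomp Wsp (Wgen Wsp Y3 om)"
    unfolding dsum_decomp_def
  proof
    fix w assume w: "w \<in> Wsp"
    note c = comp3[of w]
    have m: "\<forall>k. comp (Wgen UNIV Y3 om) k w \<in> Wgen Wsp Y3 om k"
      unfolding Wgen_W using c comp3_W[OF w] by blast
    show "\<exists>f. finite {k. f k \<noteq> 0} \<and> (\<forall>k. f k \<in> Wgen Wsp Y3 om k) \<and> w = (\<Sum>k\<in>{k. f k \<noteq> 0}. f k)"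
      by (rule exI[of _ "\<lambda>k. comp (Wgen UNIV Y3 om) k w"]) (intro conjI m conjunct1[OF c] conjunct2[OF conjunct2[OF c]])
  qed
next
  fix n
  have "fin_dim (Wgen UNIV Y3 om n)" using gm3 by (simp add: gen_module_def)
  then obtain B where B: "finite B" "Wgen UNIV Y3 om n \<subseteq> cspan B"
    unfolding fin_dim_def by blast
  have "Wgen Wsp Y3 om n \<subseteq> Wgen UNIV Y3 om n" by (simp add: Wgen_W)
  then have "Wgen Wsp Y3 om n \<subseteq> cspan B" using B(2) by (rule order_trans)
  then show "fin_dim (Wgen Wsp Y3 om n)" unfolding fin_dim_def using B(1) by blast
next
  fix n
  have "\<forall>n. \<exists>K. \<forall>k<K. Wgen UNIV Y3 om (n + of_int k) = {0}"
    using gm3 by (simp add: gen_module_def)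
  then obtain K where K: "\<forall>k<K. Wgen UNIV Y3 om (n + of_int k) = {0}" by blast
  have z: "0 \<in> Wgen Wsp Y3 om m" for m
    using W_0 by (simp add: Wgen_W Wgen_UNIV)
  show "\<exists>K. \<forall>k<K. Wgen Wsp Y3 om (n + of_int k) = {0}"
  proof (intro exI allI impI)
    fix k assume "k < K"
    then have "Wgen UNIV Y3 om (n + of_int k) = {0}" using K by blast
    then show "Wgen Wsp Y3 om (n + of_int k) = {0}" using z[of "n + of_int k"] unfolding Wgen_W by blast
  qed
qed

lemma ord_W: "ord_module YV vac om UNIV Y3 \<Longrightarrow> ord_module YV vac om Wsp Y3"
  unfolding ord_module_def using gen_W by (simp add: Wgen_W)

end

definition opp :: "('a::cvs \<Rightarrow> 'a) \<Rightarrow> complex poly \<Rightarrow> 'a \<Rightarrow> 'a" where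
  "opp T p x = (\<Sum>i<Suc (degree p). coeff p i *\<^sub>C (T ^^ i) x)"

lemma opp_bound: "degree p < n \<Longrightarrow> opp T p x = (\<Sum>i<n. coeff p i *\<^sub>C (T ^^ i) x)"
  unfolding opp_def by (rule sum.mono_neutral_left) (auto simp: coeff_eq_0)

lemma opp_pCons: assumes l: "lin T" shows "opp T (pCons a p) x = a *\<^sub>C x + T (opp T p x)"
proof -
  have d: "degree (pCons a p) < Suc (Suc (degree p))" using degree_pCons_le[of a p] by simp
  have "opp T (pCons a p) x = (\<Sum>i<Suc (Suc (degree p)). coeff (pCons a p) i *\<^sub>C (T ^^ i) x)"
    by (rule opp_bound[OF d])
  also have "\<dots> = a *\<^sub>C x + (\<Sum>i<Suc (degree p). coeff p i *\<^sub>C T ((T ^^ i) x))"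
    by (subst sum.lessThan_Suc_shift) simp
  also have "(\<Sum>i<Suc (degree p). coeff p i *\<^sub>C T ((T ^^ i) x)) = T (opp T p x)"
    unfolding opp_def by (simp only: lin_sum[OF l] lin_scale[OF l])
  finally show ?thesis .
qed

lemma opp_0[simp]: "opp T 0 x = 0" by (simp add: opp_def)

lemma opp_lin: assumes l: "lin T" shows "lin (opp T p)"
proof (induction p)
  case 0 then show ?case by (simp add: lin_iff)
next
  case (pCons a p)
  then show ?case
    by (simp add: opp_pCons[OF l] lin_iff lin_add[OF l] lin_scale[OF l] lin_add[OF pCons.IH] lin_scale[OF pCons.IH]
        cscale_add_right cscale_cscale mult.commute)
qed

lemma opp_add: assumes l: "lin T" shows "opp T (p + q) x = opp T p x + opp T q x"
proof -
  define n where "n = Suc (max (degree p) (degree q))"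
  have "degree (p + q) < n" using degree_add_le_max[of p q] by (simp add: n_def)
  then have "opp T (p + q) x = (\<Sum>i<n. coeff (p + q) i *\<^sub>C (T ^^ i) x)" by (rule opp_bound)
  also have "\<dots> = (\<Sum>i<n. coeff p i *\<^sub>C (T ^^ i) x) + (\<Sum>i<n. coeff q i *\<^sub>C (T ^^ i) x)"
    by (simp add: cscale_add_left sum.distrib)
  also have "\<dots> = opp T p x + opp T q x"
  proof -
    have "opp T p x = (\<Sum>i<n. coeff p i *\<^sub>C (T ^^ i) x)" by (rule opp_bound) (simp add: n_def)
    moreover have "opp T q x = (\<Sum>i<n. coeff q i *\<^sub>C (T ^^ i) x)" by (rule opp_bound) (simp add: n_def)
    ultimately show ?thesis by simp
  qed
  finally show ?thesis .
qed

lemma opp_smult: assumes l: "lin T" shows "opp T (smult a p) x = a *\<^sub>C opp T p x"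
proof -
  have "degree (smult a p) < Suc (degree p)" using degree_smult_le[of a p] by simp
  then have "opp T (smult a p) x = (\<Sum>i<Suc (degree p). coeff (smult a p) i *\<^sub>C (T ^^ i) x)" by (rule opp_bound)
  also have "\<dots> = a *\<^sub>C opp T p x" unfolding opp_def by (simp only: cscale_sum cscale_cscale coeff_smult)
  finally show ?thesis .
qed

lemma opp_mult: assumes l: "lin T" shows "opp T (p * q) x = opp T p (opp T q x)"
proof (induction p)
  case 0 then show ?case by simp
next
  case (pCons a p)
  have "opp T (pCons a p * q) x = opp T (smult a q) x + opp T (pCons 0 (p * q)) x"
    by (simp add: opp_add[OF l])
  also have "\<dots> = a *\<^sub>C opp T q x + T (opp T p (opp T q x))"
    by (simp add: opp_smult[OF l] opp_pCons[OF l] pCons.IH)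
  also have "\<dots> = opp T (pCons a p) (opp T q x)" by (simp add: opp_pCons[OF l])
  finally show ?case .
qed

lemma opp_1: assumes l: "lin T" shows "opp T 1 x = x"
  using opp_pCons[OF l, of 1 0 x] by (simp add: one_pCons lin_0[OF l])

lemma opp_lin1: assumes l: "lin T" shows "opp T [:-c, 1:] x = T x - c *\<^sub>C x"
  using opp_pCons[OF l, of "-c" "[:1:]" x] opp_pCons[OF l, of 1 0 x]
  by (simp add: lin_0[OF l] cv.scale_minus_left)

lemma opp_pow: assumes l: "lin T" shows "opp T ([:-c, 1:] ^ k) x = ((\<lambda>x. T x - c *\<^sub>C x) ^^ k) x"
proof (induction k)
  case 0 then show ?case by (simp add: opp_1[OF l])
next
  case (Suc k)
  have "opp T ([:-c, 1:] ^ Suc k) x = opp T [:-c, 1:] (opp T ([:-c, 1:] ^ k) x)"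
    by (simp only: power_Suc opp_mult[OF l])
  then show ?case by (simp only: opp_lin1[OF l] Suc.IH funpow.simps(2) o_apply)
qed

lemma opp_geig: assumes l: "lin T" shows "x \<in> geig T c \<Longrightarrow> opp T p x \<in> geig T c"
proof (induction p)
  case 0 then show ?case by simp
next
  case (pCons a p)
  then show ?case by (simp add: opp_pCons[OF l] geig_add[OF l] geig_scale[OF l] geig_T[OF l])
qed

lemma opp_prod_kill:
  assumes l: "lin T" and fin: "finite S" and k0: "k0 \<in> S" and kill: "opp T (q k0) x = 0"
  shows "opp T (\<Prod>k\<in>S. q k) x = 0"
proof -
  have "(\<Prod>k\<in>S. q k) = (\<Prod>k\<in>S - {k0}. q k) * q k0"
    using prod.remove[OF fin k0, of q] by (simp add: mult.commute)
  then show ?thesis by (simp add: opp_mult[OF l] kill lin_0[OF opp_lin[OF l]])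
qed

lemma coprime_lin: "(a::complex) \<noteq> b \<Longrightarrow> coprime [:-a, 1:] [:-b, 1:]"
proof (rule coprimeI)
  fix d assume ab: "a \<noteq> b" and d1: "d dvd [:-a, 1:]" and d2: "d dvd [:-b, 1:]"
  have "d dvd [:-b, 1:] - [:-a, 1:]" using d2 d1 by (rule dvd_diff)
  moreover have "[:-b, 1:] - [:-a, 1:] = [:a - b:]" by simp
  ultimately have "d dvd [:a - b:]" by simp
  moreover have "is_unit [:a - b:]" using ab by (simp add: is_unit_const_poly_iff dvd_field_iff)
  ultimately show "is_unit d" by (rule dvd_unit_imp_unit)
qed

lemma coprime_blocks:
  assumes fin: "finite S" and a: "a \<notin> S"
  shows "coprime ([:-a, 1:] ^ e) (\<Prod>k\<in>S. [:-k, 1:] ^ f k :: complex poly)"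
  using fin a
proof (induction S rule: finite_induct)
  case empty then show ?case by simp
next
  case (insert x S)
  then have "a \<noteq> x" by auto
  then have "coprime [:-a, 1:] [:-x, 1:]" by (rule coprime_lin)
  then show ?case using insert by simp
qed

lemma bezout_poly: assumes "coprime (a::complex poly) b" shows "\<exists>x y. x * a + y * b = 1"
proof -
  have "gcd a b = 1" using assms by (rule coprime_imp_gcd_eq_1)
  then have "fst (bezout_coefficients a b) * a + snd (bezout_coefficients a b) * b = 1"
    by (simp add: bezout_coefficients_fst_snd)
  then show ?thesis by blast
qed

context mt begin

definition supp :: "('c \<Rightarrow> complex) \<Rightarrow> complex set" where
  "supp \<alpha> = {n. \<exists>w\<in>Wgen UNIV Y3 om n. \<alpha> w \<noteq> 0}"

abbreviation C3 where "C3 \<equiv> contra UNIV Y3 om"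

lemma C3_iff: "\<alpha> \<in> C3 \<longleftrightarrow> lin \<alpha> \<and> finite (supp \<alpha>)"
  by (simp add: contra_def supp_def)

lemma supp_zero: "w \<in> geig L3 n \<Longrightarrow> n \<notin> supp \<alpha> \<Longrightarrow> \<alpha> w = 0"
  by (auto simp: supp_def Wgen_UNIV)

lemma pair_eq:
  assumes "finite T" "supp \<alpha> \<subseteq> T" "\<And>k. f k \<in> geig L3 k"
  shows "pair \<alpha> f = (\<Sum>n\<in>T. \<alpha> (f n))"
  unfolding pair_def
proof (rule sum.mono_neutral_left)
  show "finite T" by fact
  show "{n. \<alpha> (f n) \<noteq> 0} \<subseteq> T" using assms(2,3) supp_zero by blast
  show "\<forall>i\<in>T - {n. \<alpha> (f n) \<noteq> 0}. \<alpha> (f i) = 0" by auto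
qed

lemma Fvee_eqT: "finite T \<Longrightarrow> supp \<alpha> \<subseteq> T \<Longrightarrow> Fvee F \<alpha> w1 w2 = (\<Sum>n\<in>T. \<alpha> (F w1 w2 n))"
  unfolding Fvee_def by (rule pair_eq) (simp_all add: F_gr)

lemma Fvee_eq: "\<alpha> \<in> C3 \<Longrightarrow> Fvee F \<alpha> w1 w2 = (\<Sum>n\<in>supp \<alpha>. \<alpha> (F w1 w2 n))"
  by (rule Fvee_eqT) (simp_all add: C3_iff)

lemma C3_add: "\<alpha> \<in> C3 \<Longrightarrow> \<beta> \<in> C3 \<Longrightarrow> (\<lambda>w. \<alpha> w + \<beta> w) \<in> C3"
proof -
  assume a: "\<alpha> \<in> C3" and b: "\<beta> \<in> C3"
  have "supp (\<lambda>w. \<alpha> w + \<beta> w) \<subseteq> supp \<alpha> \<union> supp \<beta>" by (auto simp: supp_def)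
  then show ?thesis using a b by (auto simp: C3_iff lin_iff distrib_left intro: finite_subset)
qed

lemma C3_scale: "\<alpha> \<in> C3 \<Longrightarrow> (\<lambda>w. a * \<alpha> w) \<in> C3"
proof -
  assume a: "\<alpha> \<in> C3"
  have "supp (\<lambda>w. a * \<alpha> w) \<subseteq> supp \<alpha>" by (auto simp: supp_def)
  then show ?thesis using a by (auto simp: C3_iff lin_iff distrib_left intro: finite_subset)
qed

lemma C3_0: "(\<lambda>w. 0) \<in> C3"
proof -
  have "supp (\<lambda>w. 0) = {}" by (simp add: supp_def)
  then show ?thesis by (simp add: C3_iff lin_iff)
qed

lemma C3_diff: "\<alpha> \<in> C3 \<Longrightarrow> \<beta> \<in> C3 \<Longrightarrow> (\<lambda>w. \<alpha> w - \<beta> w) \<in> C3"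
  using C3_add[of \<alpha> "\<lambda>w. (-1) * \<beta> w"] C3_scale[of \<beta> "-1"] by simp

lemma C3_fin: "\<alpha> \<in> C3 \<Longrightarrow> finite (supp \<alpha>)" by (simp add: C3_iff)
lemma C3_lin: "\<alpha> \<in> C3 \<Longrightarrow> lin \<alpha>" by (simp add: C3_iff)

lemma Fvee_add: "\<alpha> \<in> C3 \<Longrightarrow> \<beta> \<in> C3 \<Longrightarrow>
   Fvee F (\<lambda>w. \<alpha> w + \<beta> w) = (\<lambda>w1 w2. Fvee F \<alpha> w1 w2 + Fvee F \<beta> w1 w2)"
proof (intro ext)
  fix w1 w2 assume a: "\<alpha> \<in> C3" and b: "\<beta> \<in> C3"
  let ?T = "supp \<alpha> \<union> supp \<beta>"
  have fT: "finite ?T" using a b by (simp add: C3_iff)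
  have "supp (\<lambda>w. \<alpha> w + \<beta> w) \<subseteq> ?T" by (auto simp: supp_def)
  then show "Fvee F (\<lambda>w. \<alpha> w + \<beta> w) w1 w2 = Fvee F \<alpha> w1 w2 + Fvee F \<beta> w1 w2"
    using Fvee_eqT[OF fT] by (simp add: sum.distrib)
qed

lemma Fvee_scale: "\<alpha> \<in> C3 \<Longrightarrow> Fvee F (\<lambda>w. a * \<alpha> w) = (\<lambda>w1 w2. a * Fvee F \<alpha> w1 w2)"
proof (intro ext)
  fix w1 w2 assume a: "\<alpha> \<in> C3"
  have fT: "finite (supp \<alpha>)" using a by (simp add: C3_iff)
  have "supp (\<lambda>w. a * \<alpha> w) \<subseteq> supp \<alpha>" by (auto simp: supp_def)
  then show "Fvee F (\<lambda>w. a * \<alpha> w) w1 w2 = a * Fvee F \<alpha> w1 w2"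
    using Fvee_eqT[OF fT] by (simp add: sum_distrib_left)
qed

lemma Fvee_diff: "\<alpha> \<in> C3 \<Longrightarrow> \<beta> \<in> C3 \<Longrightarrow>
   Fvee F (\<lambda>w. \<alpha> w - \<beta> w) = (\<lambda>w1 w2. Fvee F \<alpha> w1 w2 - Fvee F \<beta> w1 w2)"
  using Fvee_add[of \<alpha> "\<lambda>w. (-1) * \<beta> w"] Fvee_scale[of \<beta> "-1"] C3_scale[of \<beta> "-1"] by simp

lemma Fvee_0arg: "\<alpha> \<in> C3 \<Longrightarrow> Fvee F \<alpha> 0 w2 = 0"
  by (simp add: Fvee_eq lin_0[OF F_lin1] lin_0[OF C3_lin])

lemma qpair:
  assumes a: "\<alpha> \<in> C3" and u: "u \<in> Vgr YV om d" and fT: "finite T"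
    and sT: "{k. k + of_int (d - p - 1) \<in> supp \<alpha>} \<subseteq> T"
  shows "(\<Sum>k\<in>T. \<alpha> (Y3 u p (F w1 w2 k)))
       = Fvee F \<alpha> w1 (Y2 u p w2) + (\<Sum>m\<in>{m. Y1 u (int m) w1 \<noteq> 0}. qc p m * Fvee F \<alpha> (Y1 u (int m) w1) w2)"
proof -
  define s where "s = (of_int (d - p - 1) :: complex)"
  have la: "lin \<alpha>" and fa: "finite (supp \<alpha>)" using a by (simp_all add: C3_iff)
  obtain N where N: "\<forall>m\<ge>N. Y1 u (int m) w1 = 0" using Y1_trunc by blast
  define A where "A = (\<Sum>k'\<in>supp \<alpha>. \<alpha> (bar_act UNIV Y3 om u p (F w1 w2) k'))"
  have "A = (\<Sum>k'\<in>supp \<alpha>. \<alpha> (Y3 u p (F w1 w2 (k' - s))))"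
    unfolding A_def s_def by (simp add: bar_hom[OF u F_gr])
  also have "\<dots> = (\<Sum>k\<in>(\<lambda>k'. k' - s) ` supp \<alpha>. \<alpha> (Y3 u p (F w1 w2 k)))"
  proof -
    have inj: "inj_on (\<lambda>k'. k' - s) (supp \<alpha>)" by (simp add: inj_on_def)
    show ?thesis by (simp add: sum.reindex[OF inj])
  qed
  also have "\<dots> = (\<Sum>k\<in>T. \<alpha> (Y3 u p (F w1 w2 k)))"
  proof (rule sum.mono_neutral_left[OF fT])
    show "(\<lambda>k'. k' - s) ` supp \<alpha> \<subseteq> T" using sT by (force simp: s_def)
    show "\<forall>k\<in>T - (\<lambda>k'. k' - s) ` supp \<alpha>. \<alpha> (Y3 u p (F w1 w2 k)) = 0"
    proof
      fix k assume "k \<in> T - (\<lambda>k'. k' - s) ` supp \<alpha>"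
      then have ns: "k + s \<notin> supp \<alpha>" by (metis DiffD2 add_diff_cancel image_eqI)
      have "Y3 u p (F w1 w2 k) \<in> geig L3 (k + s)" unfolding s_def by (rule shift3[OF u F_gr])
      then show "\<alpha> (Y3 u p (F w1 w2 k)) = 0" using ns supp_zero by blast
    qed
  qed
  finally have A1: "A = (\<Sum>k\<in>T. \<alpha> (Y3 u p (F w1 w2 k)))" .
  have "A = (\<Sum>k'\<in>supp \<alpha>. \<alpha> (F w1 (Y2 u p w2) k' + (\<Sum>m<N. qc p m *\<^sub>C F (Y1 u (int m) w1) w2 k')))"
    unfolding A_def using qi_eq[OF N, of p w2] by (simp add: algebra_simps)
  also have "\<dots> = (\<Sum>k'\<in>supp \<alpha>. \<alpha> (F w1 (Y2 u p w2) k')) + (\<Sum>m<N. qc p m * (\<Sum>k'\<in>supp \<alpha>. \<alpha> (F (Y1 u (int m) w1) w2 k')))"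
    by (simp add: lin_add[OF la] lin_sum[OF la] lin_scale[OF la] sum.distrib sum_distrib_left sum.swap[of _ "supp \<alpha>"])
  also have "\<dots> = Fvee F \<alpha> w1 (Y2 u p w2) + (\<Sum>m<N. qc p m * Fvee F \<alpha> (Y1 u (int m) w1) w2)"
    by (simp add: Fvee_eq[OF a])
  also have "(\<Sum>m<N. qc p m * Fvee F \<alpha> (Y1 u (int m) w1) w2) = (\<Sum>m\<in>{m. Y1 u (int m) w1 \<noteq> 0}. qc p m * Fvee F \<alpha> (Y1 u (int m) w1) w2)"
  proof (rule sum.mono_neutral_right)
    show "finite {..<N}" by simp
    show "{m. Y1 u (int m) w1 \<noteq> 0} \<subseteq> {..<N}" using N by (auto simp: not_less[symmetric])
    show "\<forall>i\<in>{..<N} - {m. Y1 u (int m) w1 \<noteq> 0}. qc p i * Fvee F \<alpha> (Y1 u (int i) w1) w2 = 0"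
      using Fvee_0arg[OF a] by simp
  qed
  finally show ?thesis using A1 by simp
qed

definition A3 where "A3 = {\<alpha> \<in> C3. Fvee F \<alpha> = (\<lambda>w1 w2. 0)}"

lemma A3_add: "\<alpha> \<in> A3 \<Longrightarrow> \<beta> \<in> A3 \<Longrightarrow> (\<lambda>w. \<alpha> w + \<beta> w) \<in> A3"
  by (simp add: A3_def C3_add Fvee_add)
lemma A3_scale: "\<alpha> \<in> A3 \<Longrightarrow> (\<lambda>w. a * \<alpha> w) \<in> A3"
  by (simp add: A3_def C3_scale Fvee_scale)
lemma A3_0: "(\<lambda>w. 0) \<in> A3"
  unfolding A3_def Fvee_def pair_def using C3_0 by simp

lemma A3_L3: "\<alpha> \<in> A3 \<Longrightarrow> (\<lambda>w. \<alpha> (L3 w)) \<in> A3"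
proof -
  assume a3: "\<alpha> \<in> A3"
  then have a: "\<alpha> \<in> C3" and z: "Fvee F \<alpha> = (\<lambda>w1 w2. 0)" by (simp_all add: A3_def)
  have ssub: "supp (\<lambda>w. \<alpha> (L3 w)) \<subseteq> supp \<alpha>"
    by (auto simp: supp_def Wgen_UNIV intro: geig_T[OF L3_lin])
  have c: "(\<lambda>w. \<alpha> (L3 w)) \<in> C3"
    using a ssub by (auto simp: C3_iff intro: lin_comp L3_lin finite_subset)
  have "Fvee F (\<lambda>w. \<alpha> (L3 w)) w1 w2 = 0" for w1 w2
  proof -
    have fa: "finite (supp \<alpha>)" using a by (simp add: C3_iff)
    have "Fvee F (\<lambda>w. \<alpha> (L3 w)) w1 w2 = (\<Sum>k\<in>supp \<alpha>. \<alpha> (L3 (F w1 w2 k)))"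
      by (rule Fvee_eqT[OF fa ssub])
    also have "\<dots> = Fvee F \<alpha> w1 (Y2 om 1 w2) + (\<Sum>m\<in>{m. Y1 om (int m) w1 \<noteq> 0}. qc 1 m * Fvee F \<alpha> (Y1 om (int m) w1) w2)"
      by (rule qpair[OF a om_wt fa]) simp
    also have "\<dots> = 0" using z by simp
    finally show ?thesis .
  qed
  then show ?thesis using c by (auto simp: A3_def)
qed

lemma A3_opp: "\<alpha> \<in> A3 \<Longrightarrow> (\<lambda>w. \<alpha> (opp L3 p w)) \<in> A3"
proof (induction p arbitrary: \<alpha>)
  case 0 then show ?case using A3_def C3_iff A3_0 by (simp add: lin_0)
next
  case (pCons a p)
  have la: "lin \<alpha>" using pCons.prems by (simp add: A3_def C3_iff)
  have "(\<lambda>w. \<alpha> (opp L3 (pCons a p) w)) = (\<lambda>w. a * \<alpha> w + (\<lambda>w. \<alpha> (L3 w)) (opp L3 p w))"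
    by (simp add: opp_pCons[OF L3_lin] lin_add[OF la] lin_scale[OF la])
  also have "\<dots> \<in> A3"
    by (rule A3_add[OF A3_scale[OF pCons.prems]]) (rule pCons.IH, rule A3_L3[OF pCons.prems])
  finally show ?case .
qed

lemma A3_F: assumes a3: "\<alpha> \<in> A3" shows "\<alpha> (F w1 w2 n1) = 0"
proof (cases "n1 \<in> supp \<alpha>")
  case False then show ?thesis using supp_zero F_gr by blast
next
  case True
  have a: "\<alpha> \<in> C3" using a3 by (simp add: A3_def)
  have la: "lin \<alpha>" and fa: "finite (supp \<alpha>)" using a by (simp_all add: C3_iff)
  define S where "S = supp \<alpha>"
  define S' where "S' = S - {n1}"
  have "\<forall>k. \<exists>e. ((\<lambda>x. L3 x - k *\<^sub>C x) ^^ e) (F w1 w2 k) = 0"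
    using F_gr by (simp add: geig_def)
  then obtain e where e: "\<And>k. ((\<lambda>x. L3 x - k *\<^sub>C x) ^^ e k) (F w1 w2 k) = 0" by metis
  define q where "q k = [:-k, 1:] ^ e k" for k
  have qk: "opp L3 (q k) (F w1 w2 k) = 0" for k by (simp add: q_def opp_pow[OF L3_lin] e)
  define r where "r = (\<Prod>k\<in>S'. q k)"
  have fS': "finite S'" using fa by (simp add: S'_def S_def)
  have "coprime (q n1) r" unfolding q_def r_def by (rule coprime_blocks[OF fS']) (simp add: S'_def)
  then obtain x y where xy: "x * q n1 + y * r = 1" using bezout_poly by blast
  define p where "p = y * r"
  define \<beta> where "\<beta> = (\<lambda>w. \<alpha> (opp L3 p w))"
  have b3: "\<beta> \<in> A3" unfolding \<beta>_def by (rule A3_opp[OF a3])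
  have ssub: "supp \<beta> \<subseteq> S"
    by (auto simp: supp_def Wgen_UNIV \<beta>_def S_def intro: opp_geig[OF L3_lin])
  have "0 = Fvee F \<beta> w1 w2" using b3 by (simp add: A3_def)
  also have "\<dots> = (\<Sum>k\<in>S. \<beta> (F w1 w2 k))" by (rule Fvee_eqT) (use fa ssub S_def in auto)
  also have "\<dots> = \<beta> (F w1 w2 n1) + (\<Sum>k\<in>S'. \<beta> (F w1 w2 k))"
    unfolding S'_def using True fa S_def by (simp add: sum.remove)
  also have "(\<Sum>k\<in>S'. \<beta> (F w1 w2 k)) = 0"
  proof (rule sum.neutral, rule ballI)
    fix k assume k: "k \<in> S'"
    have "opp L3 r (F w1 w2 k) = 0" unfolding r_def by (rule opp_prod_kill[OF L3_lin fS' k qk])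
    then show "\<beta> (F w1 w2 k) = 0"
      by (simp add: \<beta>_def p_def opp_mult[OF L3_lin] lin_0[OF opp_lin[OF L3_lin]] lin_0[OF la])
  qed
  also have "\<beta> (F w1 w2 n1) = \<alpha> (F w1 w2 n1)"
  proof -
    have "opp L3 (x * q n1) (F w1 w2 n1) + opp L3 p (F w1 w2 n1) = opp L3 1 (F w1 w2 n1)"
      by (simp add: opp_add[OF L3_lin, symmetric] xy p_def)
    moreover have "opp L3 (x * q n1) (F w1 w2 n1) = 0"
      by (simp add: opp_mult[OF L3_lin] qk lin_0[OF opp_lin[OF L3_lin]])
    ultimately have "opp L3 p (F w1 w2 n1) = F w1 w2 n1" by (simp add: opp_1[OF L3_lin])
    then show ?thesis by (simp add: \<beta>_def)
  qed
  finally show ?thesis by simp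
qed

lemma A3_W: "\<alpha> \<in> A3 \<Longrightarrow> w \<in> Wsp \<Longrightarrow> \<alpha> w = 0"
proof -
  assume a3: "\<alpha> \<in> A3" and w: "w \<in> Wsp"
  have la: "lin \<alpha>" using a3 by (simp add: A3_def C3_iff)
  show ?thesis
    by (rule W_induct[OF w]) (simp_all add: lin_0[OF la] lin_add[OF la] lin_scale[OF la] A3_F[OF a3])
qed

lemma claim3: "{\<alpha> \<in> C3. Fvee F \<alpha> = (\<lambda>w1 w2. 0)} = {\<alpha> \<in> C3. \<forall>w\<in>Wsp. \<alpha> w = 0}"
proof (intro set_eqI iffI)
  fix \<alpha> assume "\<alpha> \<in> {\<alpha> \<in> C3. Fvee F \<alpha> = (\<lambda>w1 w2. 0)}"
  then have "\<alpha> \<in> A3" by (simp add: A3_def)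
  then show "\<alpha> \<in> {\<alpha> \<in> C3. \<forall>w\<in>Wsp. \<alpha> w = 0}" using A3_W by (auto simp: A3_def)
next
  fix \<alpha> assume "\<alpha> \<in> {\<alpha> \<in> C3. \<forall>w\<in>Wsp. \<alpha> w = 0}"
  then have a: "\<alpha> \<in> C3" and z: "\<forall>w\<in>Wsp. \<alpha> w = 0" by auto
  have "\<And>w1 w2. Fvee F \<alpha> w1 w2 = 0" using z by (simp add: Fvee_eq[OF a] F_in_W)
  then show "\<alpha> \<in> {\<alpha> \<in> C3. Fvee F \<alpha> = (\<lambda>w1 w2. 0)}" using a by auto
qed

end

lemma cl_0: fixes \<beta> :: "'a::cvs \<Rightarrow> complex" shows "csubspace V \<Longrightarrow> clinear_on V \<beta> \<Longrightarrow> \<beta> 0 = 0"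
proof -
  assume s: "csubspace V" and l: "clinear_on V \<beta>"
  have z: "0 \<in> V" using s by (simp add: cv.subspace_def)
  have "\<beta> (0 + 0) = \<beta> 0 + \<beta> 0" using l z unfolding clinear_on_def by blast
  then show ?thesis by simp
qed

lemma cl_sum: fixes \<beta> :: "'a::cvs \<Rightarrow> complex"
  shows "csubspace V \<Longrightarrow> clinear_on V \<beta> \<Longrightarrow> (\<And>i. i \<in> A \<Longrightarrow> f i \<in> V) \<Longrightarrow>
  \<beta> (sum f A) = (\<Sum>i\<in>A. \<beta> (f i)) \<and> sum f A \<in> V"
proof (induction A rule: infinite_finite_induct)
  case (infinite A) then show ?case using cl_0[of V \<beta>] by (simp add: cv.subspace_def)
next
  case empty then show ?case using cl_0[of V \<beta>] by (simp add: cv.subspace_def)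
next
  case (insert x F)
  then have h: "\<beta> (sum f F) = (\<Sum>i\<in>F. \<beta> (f i))" "sum f F \<in> V" "f x \<in> V" by auto
  have "\<beta> (f x + sum f F) = \<beta> (f x) + \<beta> (sum f F)" using insert.prems(2) h unfolding clinear_on_def by blast
  moreover have "f x + sum f F \<in> V" using insert.prems(1) h unfolding cv.subspace_def by blast
  ultimately show ?case using insert.hyps h by simp
qed

lemma lin_extend:
  fixes V :: "'a::cvs set" and \<beta> :: "'a \<Rightarrow> complex"
  assumes s: "csubspace V" and l: "clinear_on V \<beta>"
  shows "\<exists>g. lin g \<and> (\<forall>x\<in>V. g x = \<beta> x)"
proof -
  obtain B where B: "B \<subseteq> V" "cv.independent B" "V \<subseteq> cv.span B"
    by (rule cv.maximal_independent_subset)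
  interpret P: vector_space_pair "cscale :: complex \<Rightarrow> 'a \<Rightarrow> 'a" "cscale :: complex \<Rightarrow> complex \<Rightarrow> complex"
    by (intro vector_space_pair.intro cvs_vector_space)
  define g where "g = P.construct B \<beta>"
  have "Vector_Spaces.linear (cscale :: complex \<Rightarrow> 'a \<Rightarrow> 'a) (cscale :: complex \<Rightarrow> complex \<Rightarrow> complex) g"
    unfolding g_def by (rule P.linear_construct[OF B(2)])
  then have lg: "lin g" unfolding Vector_Spaces.linear_iff lin_iff by simp
  have gb: "g b = \<beta> b" if "b \<in> B" for b unfolding g_def by (rule P.construct_basis[OF B(2) that])
  have sub: "0 \<in> V" "\<And>x y. x \<in> V \<Longrightarrow> y \<in> V \<Longrightarrow> x + y \<in> V" "\<And>c x. x \<in> V \<Longrightarrow> c *\<^sub>C x \<in> V"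
    using s by (auto simp: cv.subspace_def)
  have "x \<in> V \<and> g x = \<beta> x" if "x \<in> cv.span B" for x
    using that
  proof (induction rule: cv.span_induct_alt)
    case base then show ?case using sub(1) cl_0[OF s l] lin_0[OF lg] by simp
  next
    case (step c x y)
    have xV: "x \<in> V" using step.hyps B(1) by auto
    then have cx: "c *\<^sub>C x \<in> V" by (rule sub(3))
    have "\<beta> (c *\<^sub>C x + y) = \<beta> (c *\<^sub>C x) + \<beta> y" using l cx step.IH by (simp add: clinear_on_def)
    also have "\<beta> (c *\<^sub>C x) = c *\<^sub>C \<beta> x" using l xV by (simp add: clinear_on_def)
    finally show ?case using step.IH cx sub(2) gb[OF step.hyps] lin_add[OF lg] lin_scale[OF lg] by simp
  qed
  then show ?thesis using lg B(3) by blast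
qed

lemma lin_sumf: assumes l: "\<And>i. i \<in> A \<Longrightarrow> lin (f i)" shows "lin (\<lambda>w. \<Sum>i\<in>A. f i w :: complex)"
  unfolding lin_iff
proof (intro conjI allI)
  fix x y
  have "\<And>i. i \<in> A \<Longrightarrow> f i (x + y) = f i x + f i y" using lin_add[OF l] by blast
  then show "(\<Sum>i\<in>A. f i (x + y)) = (\<Sum>i\<in>A. f i x) + (\<Sum>i\<in>A. f i y)"
    by (simp add: sum.distrib[symmetric])
next
  fix a x
  have "\<And>i. i \<in> A \<Longrightarrow> f i (a *\<^sub>C x) = a * f i x" using lin_scale[OF l] by simp
  then show "(\<Sum>i\<in>A. f i (a *\<^sub>C x)) = a *\<^sub>C (\<Sum>i\<in>A. f i x)"
    by (simp add: sum_distrib_left)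
qed

lemma lin_cmul: assumes l: "lin f" shows "lin (\<lambda>w. c * f w :: complex)"
  unfolding lin_iff
proof (intro conjI allI)
  fix x y show "c * f (x + y) = c * f x + c * f y" by (simp add: lin_add[OF l] distrib_left)
next
  fix a x show "c * f (a *\<^sub>C x) = a *\<^sub>C (c * f x)" using lin_scale[OF l, of a x] by (simp add: mult.left_commute)
qed

context mt begin

definition RW :: "('c \<Rightarrow> complex) \<Rightarrow> ('c \<Rightarrow> complex)" where
  "RW \<alpha> = (\<lambda>w. if w \<in> Wsp then \<alpha> w else 0)"

abbreviation CW where "CW \<equiv> contra Wsp Y3 om"

lemma W_sub: "csubspace Wsp" unfolding Wsp_def by (rule cv.subspace_span)

lemma RW_in: "\<alpha> \<in> C3 \<Longrightarrow> RW \<alpha> \<in> CW"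
proof -
  assume a: "\<alpha> \<in> C3"
  have la: "lin \<alpha>" and fa: "finite (supp \<alpha>)" using a by (simp_all add: C3_iff)
  have "{n. \<exists>w\<in>Wgen Wsp Y3 om n. RW \<alpha> w \<noteq> 0} \<subseteq> supp \<alpha>"
    by (auto simp: supp_def RW_def Wgen_W)
  then have "finite {n. \<exists>w\<in>Wgen Wsp Y3 om n. RW \<alpha> w \<noteq> 0}" using fa by (rule finite_subset)
  moreover have "clinear_on Wsp (RW \<alpha>)"
    unfolding clinear_on_def
  proof (intro conjI ballI allI)
    fix x y assume "x \<in> Wsp" "y \<in> Wsp"
    then show "RW \<alpha> (x + y) = RW \<alpha> x + RW \<alpha> y" by (simp add: RW_def W_add lin_add[OF la])
  next
    fix a x assume "x \<in> Wsp"
    then show "RW \<alpha> (a *\<^sub>C x) = a *\<^sub>C RW \<alpha> x" by (simp add: RW_def W_scale lin_scale[OF la])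
  qed
  ultimately show ?thesis by (simp add: contra_def RW_def)
qed

lemma claim4: "RW ` C3 = CW"
proof
  show "RW ` C3 \<subseteq> CW" using RW_in by blast
next
  show "CW \<subseteq> RW ` C3"
  proof
    fix \<beta> assume b: "\<beta> \<in> CW"
    then have lb: "clinear_on Wsp \<beta>" and zb: "\<forall>w. w \<notin> Wsp \<longrightarrow> \<beta> w = 0"
      and fb: "finite {n. \<exists>w\<in>Wgen Wsp Y3 om n. \<beta> w \<noteq> 0}" by (simp_all add: contra_def)
    define S where "S = {n. \<exists>w\<in>Wgen Wsp Y3 om n. \<beta> w \<noteq> 0}"
    have fS: "finite S" using fb by (simp add: S_def)
    obtain g where lg: "lin g" and gb: "\<forall>x\<in>Wsp. g x = \<beta> x" using lin_extend[OF W_sub lb] by blast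
    let ?cp = "\<lambda>n. comp (Wgen UNIV Y3 om) n"
    define \<alpha> where "\<alpha> w = (\<Sum>n\<in>S. g (?cp n w))" for w
    have la: "lin \<alpha>" unfolding \<alpha>_def
      by (rule lin_sumf) (rule lin_comp[OF lg comp3_lin])
    have "supp \<alpha> \<subseteq> S"
    proof
      fix m assume "m \<in> supp \<alpha>"
      then obtain w where w: "w \<in> Wgen UNIV Y3 om m" "\<alpha> w \<noteq> 0" by (auto simp: supp_def)
      have "\<alpha> w = (\<Sum>n\<in>S. g (if n = m then w else 0))" unfolding \<alpha>_def using comp3_single[OF w(1)] by simp
      also have "\<dots> = (if m \<in> S then g w else 0)"
        using fS by (simp add: lin_0[OF lg] if_distrib sum.delta cong: if_cong)
      finally show "m \<in> S" using w(2) by (auto split: if_splits)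
    qed
    then have aC: "\<alpha> \<in> C3" using la fb by (auto simp: C3_iff S_def intro: finite_subset)
    have "RW \<alpha> = \<beta>"
    proof
      fix w show "RW \<alpha> w = \<beta> w"
      proof (cases "w \<in> Wsp")
        case False then show ?thesis using zb by (simp add: RW_def)
      next
        case True
        note c = comp3[of w]
        define D where "D = {k. ?cp k w \<noteq> 0}"
        have fD: "finite D" using c by (simp add: D_def)
        have cW: "?cp n w \<in> Wsp" for n by (rule comp3_W[OF True])
        have z: "\<beta> (?cp n w) = 0" if "n \<notin> S" for n
          using that cW[of n] c by (auto simp: S_def Wgen_W)
        have "\<alpha> w = (\<Sum>n\<in>S. \<beta> (?cp n w))" unfolding \<alpha>_def using gb cW by simp
        also have "\<dots> = (\<Sum>n\<in>S \<union> D. \<beta> (?cp n w))"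
          by (rule sum.mono_neutral_left) (use fb fD S_def D_def cl_0[OF W_sub lb] z in auto)
        also have "\<dots> = (\<Sum>n\<in>D. \<beta> (?cp n w))"
          by (rule sum.mono_neutral_right) (use fb fD S_def D_def z cl_0[OF W_sub lb] in auto)
        also have "\<dots> = \<beta> (\<Sum>n\<in>D. ?cp n w)" using cl_sum[OF W_sub lb, of D "\<lambda>n. ?cp n w"] cW by simp
        also have "(\<Sum>n\<in>D. ?cp n w) = w" using c by (simp add: D_def)
        finally show ?thesis using True by (simp add: RW_def)
      qed
    qed
    then show "\<beta> \<in> RW ` C3" using aC by blast
  qed
qed

lemma claim5: "{\<alpha> \<in> C3. RW \<alpha> = (\<lambda>w. 0)} = {\<alpha> \<in> C3. \<forall>w\<in>Wsp. \<alpha> w = 0}"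
  by (auto simp: RW_def fun_eq_iff)

end

context mt begin

lemma qc_tau: "qc (2 * h - int j - n - 2) m
  = (of_int (int m + int j - 2 * h + n + 1) gchoose m) * (-1) ^ m * z powi (2 * h - int j - int m - n - 2)"
proof -
  have "int m - (2 * h - int j - n - 2) - 1 = int m + int j - 2 * h + n + 1" by simp
  moreover have "2 * h - int j - n - 2 - int m = 2 * h - int j - int m - n - 2" by simp
  ultimately show ?thesis unfolding qc_def by metis
qed

lemma uhj: "(YV om 2 ^^ j) (comp (Vgr YV om) h v) \<in> Vgr YV om (h - int j)"
  by (rule L1_iter) (use compV in blast)

lemma finH: "finite {h. comp (Vgr YV om) h v \<noteq> 0}" using compV by blast
lemma finJ: "finite {j. (YV om 2 ^^ j) (comp (Vgr YV om) h v) \<noteq> 0}"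
  by (rule L1_fin) (use compV in blast)

definition Tset :: "'v \<Rightarrow> int \<Rightarrow> ('c \<Rightarrow> complex) \<Rightarrow> complex set" where
  "Tset v n \<alpha> = (\<Union>h\<in>{h. comp (Vgr YV om) h v \<noteq> 0}. \<Union>j\<in>{j. (YV om 2 ^^ j) (comp (Vgr YV om) h v) \<noteq> 0}.
      {k. k + of_int ((h - int j) - (2 * h - int j - n - 2) - 1) \<in> supp \<alpha>})"

lemma fin_shift: "finite A \<Longrightarrow> finite {k::complex. k + s \<in> A}"
proof -
  assume "finite A"
  moreover have "{k. k + s \<in> A} = (\<lambda>x. x - s) ` A" by (force simp: algebra_simps)
  ultimately show ?thesis by simp
qed

lemma Tset_fin: "\<alpha> \<in> C3 \<Longrightarrow> finite (Tset v n \<alpha>)"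
  unfolding Tset_def using finH finJ C3_fin fin_shift by blast

abbreviation CA where "CA v n \<alpha> \<equiv> contra_act YV om UNIV Y3 v n \<alpha>"

lemma CA_eq: "CA v n \<alpha> w = (\<Sum>h\<in>{h. comp (Vgr YV om) h v \<noteq> 0}.
        \<Sum>j\<in>{j. (YV om 2 ^^ j) (comp (Vgr YV om) h v) \<noteq> 0}.
          ((-1) powi h / of_nat (fact j)) *
          \<alpha> (Y3 ((YV om 2 ^^ j) (comp (Vgr YV om) h v)) (2 * h - int j - n - 2) w))"
  by (simp add: contra_act_def)

lemma CA_C3: assumes a: "\<alpha> \<in> C3" shows "CA v n \<alpha> \<in> C3 \<and> supp (CA v n \<alpha>) \<subseteq> Tset v n \<alpha>"
proof -
  have la: "lin \<alpha>" using a by (simp add: C3_iff)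
  have l: "lin (CA v n \<alpha>)"
    unfolding CA_eq by (intro lin_sumf lin_cmul lin_comp[OF la Y3_lin])
  have s: "supp (CA v n \<alpha>) \<subseteq> Tset v n \<alpha>"
  proof
    fix m assume "m \<in> supp (CA v n \<alpha>)"
    then obtain w where w: "w \<in> geig L3 m" "CA v n \<alpha> w \<noteq> 0" by (auto simp: supp_def Wgen_UNIV)
    then obtain h j where h: "h \<in> {h. comp (Vgr YV om) h v \<noteq> 0}"
      and j: "j \<in> {j. (YV om 2 ^^ j) (comp (Vgr YV om) h v) \<noteq> 0}"
      and nz: "\<alpha> (Y3 ((YV om 2 ^^ j) (comp (Vgr YV om) h v)) (2 * h - int j - n - 2) w) \<noteq> 0"
      unfolding CA_eq by (metis (no_types, lifting) mult_zero_right sum.neutral)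
    have "Y3 ((YV om 2 ^^ j) (comp (Vgr YV om) h v)) (2 * h - int j - n - 2) w
          \<in> geig L3 (m + of_int ((h - int j) - (2 * h - int j - n - 2) - 1))"
      by (rule shift3[OF uhj w(1)])
    then have "m + of_int ((h - int j) - (2 * h - int j - n - 2) - 1) \<in> supp \<alpha>"
      using nz supp_zero by blast
    then show "m \<in> Tset v n \<alpha>" unfolding Tset_def using h j by blast
  qed
  have "finite (supp (CA v n \<alpha>))" using s Tset_fin[OF a] by (rule finite_subset)
  then show ?thesis using l s by (simp add: C3_iff)
qed

lemma tau_eq: assumes a: "\<alpha> \<in> C3"
  shows "tau YV om z Y1 Y2 v n (Fvee F \<alpha>) = Fvee F (CA v n \<alpha>)"
proof (intro ext)
  fix w1 w2
  let ?H = "{h. comp (Vgr YV om) h v \<noteq> 0}"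
  let ?J = "\<lambda>h. {j. (YV om 2 ^^ j) (comp (Vgr YV om) h v) \<noteq> 0}"
  let ?u = "\<lambda>h j. (YV om 2 ^^ j) (comp (Vgr YV om) h v)"
  let ?P = "\<lambda>h j. 2 * h - int j - n - 2"
  let ?cf = "\<lambda>h j. ((-1) powi h / of_nat (fact j)) :: complex"
  let ?T = "Tset v n \<alpha>"
  have fT: "finite ?T" by (rule Tset_fin[OF a])
  note c = CA_C3[OF a]
  have "Fvee F (CA v n \<alpha>) w1 w2 = (\<Sum>k\<in>?T. CA v n \<alpha> (F w1 w2 k))"
    by (rule Fvee_eqT[OF fT]) (use c in blast)
  also have "\<dots> = (\<Sum>k\<in>?T. \<Sum>h\<in>?H. \<Sum>j\<in>?J h. ?cf h j * \<alpha> (Y3 (?u h j) (?P h j) (F w1 w2 k)))"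
    unfolding CA_eq ..
  also have "\<dots> = (\<Sum>h\<in>?H. \<Sum>j\<in>?J h. ?cf h j * (\<Sum>k\<in>?T. \<alpha> (Y3 (?u h j) (?P h j) (F w1 w2 k))))"
    by (simp add: sum.swap[of _ ?T] sum_distrib_left)
  also have "\<dots> = (\<Sum>h\<in>?H. \<Sum>j\<in>?J h. ?cf h j *
      (Fvee F \<alpha> w1 (Y2 (?u h j) (?P h j) w2) + (\<Sum>m\<in>{m. Y1 (?u h j) (int m) w1 \<noteq> 0}. qc (?P h j) m * Fvee F \<alpha> (Y1 (?u h j) (int m) w1) w2)))"
  proof (intro sum.cong refl)
    fix h j assume h: "h \<in> ?H" and j: "j \<in> ?J h"
    have "{k. k + of_int ((h - int j) - ?P h j - 1) \<in> supp \<alpha>} \<subseteq> ?T"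
      unfolding Tset_def using h j by blast
    then show "?cf h j * (\<Sum>k\<in>?T. \<alpha> (Y3 (?u h j) (?P h j) (F w1 w2 k))) = ?cf h j *
      (Fvee F \<alpha> w1 (Y2 (?u h j) (?P h j) w2) + (\<Sum>m\<in>{m. Y1 (?u h j) (int m) w1 \<noteq> 0}. qc (?P h j) m * Fvee F \<alpha> (Y1 (?u h j) (int m) w1) w2))"
      using qpair[OF a uhj fT] by simp
  qed
  also have "\<dots> = tau YV om z Y1 Y2 v n (Fvee F \<alpha>) w1 w2"
    unfolding tau_def Let_def
  proof (intro sum.cong refl)
    fix h j
    show "?cf h j * (Fvee F \<alpha> w1 (Y2 (?u h j) (?P h j) w2) + (\<Sum>m\<in>{m. Y1 (?u h j) (int m) w1 \<noteq> 0}. qc (?P h j) m * Fvee F \<alpha> (Y1 (?u h j) (int m) w1) w2))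
      = ?cf h j * ((\<Sum>m\<in>{m. Y1 (?u h j) (int m) w1 \<noteq> 0}.
              (of_int (int m + int j - 2 * h + n + 1) gchoose m) * (-1) ^ m
              * z powi (2 * h - int j - int m - n - 2) * Fvee F \<alpha> (Y1 (?u h j) (int m) w1) w2)
           + Fvee F \<alpha> w1 (Y2 (?u h j) (2 * h - int j - n - 2) w2))"
      by (simp add: qc_tau add.commute)
  qed
  finally show "tau YV om z Y1 Y2 v n (Fvee F \<alpha>) w1 w2 = Fvee F (CA v n \<alpha>) w1 w2" by simp
qed

lemma RW_CA: "RW (CA v n \<alpha>) = contra_act YV om Wsp Y3 v n (RW \<alpha>)"
proof
  fix w show "RW (CA v n \<alpha>) w = contra_act YV om Wsp Y3 v n (RW \<alpha>) w"
  proof (cases "w \<in> Wsp")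
    case True
    then show ?thesis unfolding RW_def contra_act_def using Y3_W[OF True] by simp
  next
    case False then show ?thesis by (simp add: RW_def contra_act_def)
  qed
qed

definition phi :: "('a \<Rightarrow> 'b \<Rightarrow> complex) \<Rightarrow> ('c \<Rightarrow> complex)" where
  "phi l = RW (SOME \<alpha>. \<alpha> \<in> C3 \<and> Fvee F \<alpha> = l)"

lemma claim3_dir1: "\<gamma> \<in> C3 \<Longrightarrow> Fvee F \<gamma> = (\<lambda>w1 w2. 0) \<Longrightarrow> \<forall>w\<in>Wsp. \<gamma> w = 0"
proof -
  assume "\<gamma> \<in> C3" "Fvee F \<gamma> = (\<lambda>w1 w2. 0)"
  then have m: "\<gamma> \<in> {\<alpha> \<in> C3. Fvee F \<alpha> = (\<lambda>w1 w2. 0)}" by simp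
  have "\<gamma> \<in> {\<alpha> \<in> C3. \<forall>w\<in>Wsp. \<alpha> w = 0}" by (subst claim3[symmetric]) (rule m)
  then show ?thesis by simp
qed

lemma claim3_dir2: "\<gamma> \<in> C3 \<Longrightarrow> \<forall>w\<in>Wsp. \<gamma> w = 0 \<Longrightarrow> Fvee F \<gamma> = (\<lambda>w1 w2. 0)"
proof -
  assume "\<gamma> \<in> C3" "\<forall>w\<in>Wsp. \<gamma> w = 0"
  then have m: "\<gamma> \<in> {\<alpha> \<in> C3. \<forall>w\<in>Wsp. \<alpha> w = 0}" by simp
  have "\<gamma> \<in> {\<alpha> \<in> C3. Fvee F \<alpha> = (\<lambda>w1 w2. 0)}" by (subst claim3) (rule m)
  then show ?thesis by simp
qed

lemma Fvee_R: "\<alpha> \<in> C3 \<Longrightarrow> \<beta> \<in> C3 \<Longrightarrow> Fvee F \<alpha> = Fvee F \<beta> \<Longrightarrow> RW \<alpha> = RW \<beta>"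
proof -
  assume a: "\<alpha> \<in> C3" and b: "\<beta> \<in> C3" and e: "Fvee F \<alpha> = Fvee F \<beta>"
  have g: "(\<lambda>w. \<alpha> w - \<beta> w) \<in> C3" using C3_diff[OF a b] .
  have "Fvee F (\<lambda>w. \<alpha> w - \<beta> w) = (\<lambda>w1 w2. 0)" using Fvee_diff[OF a b] e by simp
  then have z: "\<forall>w\<in>Wsp. \<alpha> w - \<beta> w = 0" by (rule claim3_dir1[OF g])
  show ?thesis
  proof
    fix w show "RW \<alpha> w = RW \<beta> w" using z by (simp add: RW_def)
  qed
qed

lemma R_Fvee: "\<alpha> \<in> C3 \<Longrightarrow> \<beta> \<in> C3 \<Longrightarrow> RW \<alpha> = RW \<beta> \<Longrightarrow> Fvee F \<alpha> = Fvee F \<beta>"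
proof -
  assume a: "\<alpha> \<in> C3" and b: "\<beta> \<in> C3" and e: "RW \<alpha> = RW \<beta>"
  have g: "(\<lambda>w. \<alpha> w - \<beta> w) \<in> C3" using C3_diff[OF a b] .
  have "\<forall>w\<in>Wsp. \<alpha> w - \<beta> w = 0"
  proof
    fix w assume w: "w \<in> Wsp"
    have "RW \<alpha> w = RW \<beta> w" using e by simp
    then show "\<alpha> w - \<beta> w = 0" using w by (simp add: RW_def)
  qed
  then have "Fvee F (\<lambda>w. \<alpha> w - \<beta> w) = (\<lambda>w1 w2. 0)" by (rule claim3_dir2[OF g])
  then have z: "\<And>w1 w2. Fvee F \<alpha> w1 w2 - Fvee F \<beta> w1 w2 = 0" using Fvee_diff[OF a b] by metis
  show ?thesis
  proof (intro ext)
    fix w1 w2 show "Fvee F \<alpha> w1 w2 = Fvee F \<beta> w1 w2" using z[of w1 w2] by simp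
  qed
qed

lemma phi_F: "\<alpha> \<in> C3 \<Longrightarrow> phi (Fvee F \<alpha>) = RW \<alpha>"
proof -
  assume a: "\<alpha> \<in> C3"
  have "\<exists>\<alpha>'. \<alpha>' \<in> C3 \<and> Fvee F \<alpha>' = Fvee F \<alpha>" using a by blast
  then have s: "(SOME \<alpha>'. \<alpha>' \<in> C3 \<and> Fvee F \<alpha>' = Fvee F \<alpha>) \<in> C3 \<and>
      Fvee F (SOME \<alpha>'. \<alpha>' \<in> C3 \<and> Fvee F \<alpha>' = Fvee F \<alpha>) = Fvee F \<alpha>" by (rule someI_ex)
  show ?thesis unfolding phi_def using Fvee_R[OF _ a] s by blast
qed

lemma claim6: "\<exists>\<phi>. bij_betw \<phi> (Fvee F ` C3) (contra Wsp Y3 om)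
         \<and> (\<forall>l1\<in>Fvee F ` C3. \<forall>l2\<in>Fvee F ` C3.
               \<phi> (\<lambda>w1 w2. l1 w1 w2 + l2 w1 w2) = (\<lambda>w. \<phi> l1 w + \<phi> l2 w))
         \<and> (\<forall>a. \<forall>lam\<in>Fvee F ` C3. \<phi> (\<lambda>w1 w2. a * lam w1 w2) = (\<lambda>w. a * \<phi> lam w))
         \<and> (\<forall>v n. \<forall>lam\<in>Fvee F ` C3.
               \<phi> (tau YV om z Y1 Y2 v n lam) = contra_act YV om Wsp Y3 v n (\<phi> lam))"
proof (rule exI[of _ phi], intro conjI ballI allI)
  show "bij_betw phi (Fvee F ` C3) (contra Wsp Y3 om)"
    unfolding bij_betw_def
  proof
    show "inj_on phi (Fvee F ` C3)"
    proof (rule inj_onI)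
      fix l1 l2 assume "l1 \<in> Fvee F ` C3" "l2 \<in> Fvee F ` C3" "phi l1 = phi l2"
      then obtain \<alpha>1 \<alpha>2 where "\<alpha>1 \<in> C3" "\<alpha>2 \<in> C3" "l1 = Fvee F \<alpha>1" "l2 = Fvee F \<alpha>2" "phi l1 = phi l2" by blast
      then show "l1 = l2" using phi_F R_Fvee by metis
    qed
    have "phi ` Fvee F ` C3 = RW ` C3" by (auto simp: image_image phi_F)
    then show "phi ` Fvee F ` C3 = contra Wsp Y3 om" using claim4 by simp
  qed
next
  fix l1 l2 assume "l1 \<in> Fvee F ` C3" "l2 \<in> Fvee F ` C3"
  then obtain \<alpha>1 \<alpha>2 where a: "\<alpha>1 \<in> C3" "\<alpha>2 \<in> C3" "l1 = Fvee F \<alpha>1" "l2 = Fvee F \<alpha>2" by blast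
  have "phi (\<lambda>w1 w2. Fvee F \<alpha>1 w1 w2 + Fvee F \<alpha>2 w1 w2) = RW (\<lambda>w. \<alpha>1 w + \<alpha>2 w)"
    using Fvee_add[OF a(1,2)] phi_F[OF C3_add[OF a(1,2)]] by simp
  then show "phi (\<lambda>w1 w2. l1 w1 w2 + l2 w1 w2) = (\<lambda>w. phi l1 w + phi l2 w)"
    unfolding a(3,4) phi_F[OF a(1)] phi_F[OF a(2)] by (simp add: RW_def fun_eq_iff)
next
  fix a l assume "l \<in> Fvee F ` C3"
  then obtain \<alpha> where al: "\<alpha> \<in> C3" "l = Fvee F \<alpha>" by blast
  have "phi (\<lambda>w1 w2. a * Fvee F \<alpha> w1 w2) = RW (\<lambda>w. a * \<alpha> w)"
    using Fvee_scale[OF al(1)] phi_F[OF C3_scale[OF al(1)]] by simp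
  then show "phi (\<lambda>w1 w2. a * l w1 w2) = (\<lambda>w. a * phi l w)"
    unfolding al(2) phi_F[OF al(1)] by (simp add: RW_def fun_eq_iff)
next
  fix v n l assume "l \<in> Fvee F ` C3"
  then obtain \<alpha> where al: "\<alpha> \<in> C3" "l = Fvee F \<alpha>" by blast
  have "phi (tau YV om z Y1 Y2 v n l) = phi (Fvee F (CA v n \<alpha>))" using tau_eq[OF al(1)] al by simp
  also have "\<dots> = RW (CA v n \<alpha>)" using CA_C3[OF al(1)] phi_F by blast
  also have "\<dots> = contra_act YV om Wsp Y3 v n (RW \<alpha>)" by (rule RW_CA)
  also have "RW \<alpha> = phi l" using phi_F[OF al(1)] al by simp
  finally show "phi (tau YV om z Y1 Y2 v n l) = contra_act YV om Wsp Y3 v n (phi l)" .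
qed

end

theorem mainTheorem3:
  fixes YV :: "'v::cvs \<Rightarrow> int \<Rightarrow> 'v \<Rightarrow> 'v" and vac om :: 'v and c z :: complex
    and Y1 :: "'v \<Rightarrow> int \<Rightarrow> 'a::cvs \<Rightarrow> 'a"
    and Y2 :: "'v \<Rightarrow> int \<Rightarrow> 'b::cvs \<Rightarrow> 'b"
    and Y3 :: "'v \<Rightarrow> int \<Rightarrow> 'c::cvs \<Rightarrow> 'c"
    and F :: "'a \<Rightarrow> 'b \<Rightarrow> complex \<Rightarrow> 'c"
  assumes "VOA YV vac om c"
    and "z \<noteq> 0"
    and "gen_module YV vac om UNIV Y1"
    and "gen_module YV vac om UNIV Y2"
    and "gen_module YV vac om UNIV Y3"
    and "quasi_intw YV om z Y1 Y2 Y3 F"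
  defines "W \<equiv> cspan {F w1 w2 k | w1 w2 k. True}"
  defines "K \<equiv> {\<alpha> \<in> contra UNIV Y3 om. \<forall>w\<in>W. \<alpha> w = 0}"
  shows "gen_module YV vac om W Y3
    \<and> (ord_module YV vac om UNIV Y3 \<longrightarrow> ord_module YV vac om W Y3)
    \<and> {\<alpha> \<in> contra UNIV Y3 om. Fvee F \<alpha> = (\<lambda>w1 w2. 0)} = K
    \<and> (\<lambda>\<alpha> w. if w \<in> W then \<alpha> w else 0) ` contra UNIV Y3 om = contra W Y3 om
    \<and> {\<alpha> \<in> contra UNIV Y3 om. (\<lambda>w. if w \<in> W then \<alpha> w else 0) = (\<lambda>w. 0)} = K
    \<and> (\<exists>\<phi>. bij_betw \<phi> (Fvee F ` contra UNIV Y3 om) (contra W Y3 om)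
         \<and> (\<forall>l1\<in>Fvee F ` contra UNIV Y3 om. \<forall>l2\<in>Fvee F ` contra UNIV Y3 om.
               \<phi> (\<lambda>w1 w2. l1 w1 w2 + l2 w1 w2) = (\<lambda>w. \<phi> l1 w + \<phi> l2 w))
         \<and> (\<forall>a. \<forall>lam\<in>Fvee F ` contra UNIV Y3 om. \<phi> (\<lambda>w1 w2. a * lam w1 w2) = (\<lambda>w. a * \<phi> lam w))
         \<and> (\<forall>v n. \<forall>lam\<in>Fvee F ` contra UNIV Y3 om.
               \<phi> (tau YV om z Y1 Y2 v n lam) = contra_act YV om W Y3 v n (\<phi> lam)))"
proof -
  interpret m: mt YV vac om c z Y1 Y2 Y3 F
    using assms(1,3,4,5,6) by (simp add: mt_def)
  have W: "W = m.Wsp" by (simp add: W_def m.Wsp_def)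
  have K: "K = {\<alpha> \<in> contra UNIV Y3 om. \<forall>w\<in>m.Wsp. \<alpha> w = 0}" by (simp add: K_def W)
  have c4: "(\<lambda>\<alpha> w. if w \<in> m.Wsp then \<alpha> w else 0) ` contra UNIV Y3 om = contra m.Wsp Y3 om"
    using m.claim4 unfolding m.RW_def[abs_def] .
  have c5: "{\<alpha> \<in> contra UNIV Y3 om. (\<lambda>w. if w \<in> m.Wsp then \<alpha> w else 0) = (\<lambda>w. 0)}
      = {\<alpha> \<in> contra UNIV Y3 om. \<forall>w\<in>m.Wsp. \<alpha> w = 0}"
    using m.claim5 unfolding m.RW_def .
  show ?thesis
    unfolding W K
    using m.gen_W m.ord_W m.claim3 c4 c5 m.claim6 by (intro conjI) blast+
qed

end
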